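(* Let $X=\ell^p(\mathbb{Z})$ with $1\leq p<\infty$, or $X=c_0(\mathbb{Z})$, and let $w=\{w_j\}_{j\in\mathbb{Z}}$ be a bounded sequence of non-zero scalars. Let $B_w\colon X\to X$ be the bilateral backward weighted shift, $B_we_i=w_ie_{i-1}$ for all $i\in\mathbb{Z}$ (i.e. $(B_wx)_{i}=w_{i+1}x_{i+1}$), where $\{e_i\}_{i\in\mathbb{Z}}$ is the canonical basis. Then the following are equivalent: (1) $\liminf_{n\to\infty}\prod_{j=-n+1}^{0}|w_j|=0$ and $\sup_{k\in\mathbb{Z},n\in\mathbb{N}}\prod_{j=k}^{k+n}|w_j|=\infty$; (2) there exists a Li-Yorke scrambled pair for $B_w$; (3) $B_w$ is Li-Yorke chaotic; (4) $B_w$ admits a dense irregular manifold; (5) $B_w$ is densely uniformly Li-Yorke chaotic.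
   Context: A pair $(x,y)\in X\times X$ is Li-Yorke scrambled for $T$ if $\liminf_n\|T^nx-T^ny\|=0$ and $\limsup_n\|T^nx-T^ny\|>0$; $T$ is Li-Yorke chaotic if there is an uncountable set $S\subset X$ every pair of distinct points of which is Li-Yorke scrambled. A vector $x$ is irregular if $\liminf_n\|T^nx\|=0$ and $\limsup_n\|T^nx\|=\infty$; an irregular manifold is a vector subspace all of whose non-zero vectors are irregular. A subset $S\subset X$ with at least two points is uniformly Li-Yorke scrambled for $T$ if there exist sequences $\{p_n\}$, $\{q_n\}$ in $\mathbb{N}$ such that for all distinct $x,y\in S$: $\lim_n\|T^{p_n}x-T^{p_n}y\|=0$ and $\lim_n\|T^{q_n}x-T^{q_n}y\|=\infty$; $T$ is densely uniformly Li-Yorke chaotic if there is a dense, uncountable such set. *)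

theory Defs
  imports "HOL-Analysis.Analysis"
begin

definition lp_space :: "real \<Rightarrow> (int \<Rightarrow> 'a::real_normed_vector) set" where
  "lp_space p = {x. (\<lambda>i. norm (x i) powr p) summable_on UNIV}"

definition lp_norm :: "real \<Rightarrow> (int \<Rightarrow> 'a::real_normed_vector) \<Rightarrow> real" where
  "lp_norm p x = (\<Sum>\<^sub>\<infinity>i. norm (x i) powr p) powr (1 / p)"

definition c0_space :: "(int \<Rightarrow> 'a::real_normed_vector) set" where
  "c0_space = {x. filterlim x (nhds 0) cofinite}"

definition sup_norm :: "(int \<Rightarrow> 'a::real_normed_vector) \<Rightarrow> real" where
  "sup_norm x = (SUP i. norm (x i))"

definition bw_shift :: "(int \<Rightarrow> 'a::real_normed_field) \<Rightarrow> (int \<Rightarrow> 'a) \<Rightarrow> (int \<Rightarrow> 'a)" where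
  "bw_shift w x = (\<lambda>i. w (i + 1) * x (i + 1))"

definition dense_wrt :: "((int \<Rightarrow> 'a::real_normed_vector) \<Rightarrow> real) \<Rightarrow> (int \<Rightarrow> 'a) set \<Rightarrow> (int \<Rightarrow> 'a) set \<Rightarrow> bool" where
  "dense_wrt N X S \<longleftrightarrow> S \<subseteq> X \<and> (\<forall>x\<in>X. \<forall>e>0. \<exists>s\<in>S. N (\<lambda>i. x i - s i) < e)"

definition li_yorke_pair ::
  "((int \<Rightarrow> 'a::real_normed_vector) \<Rightarrow> real) \<Rightarrow> ((int \<Rightarrow> 'a) \<Rightarrow> (int \<Rightarrow> 'a)) \<Rightarrow> (int \<Rightarrow> 'a) \<Rightarrow> (int \<Rightarrow> 'a) \<Rightarrow> bool" where
  "li_yorke_pair N T x y \<longleftrightarrow>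
     liminf (\<lambda>n. ereal (N (\<lambda>i. (T ^^ n) x i - (T ^^ n) y i))) = 0 \<and>
     limsup (\<lambda>n. ereal (N (\<lambda>i. (T ^^ n) x i - (T ^^ n) y i))) > 0"

definition li_yorke_chaotic ::
  "((int \<Rightarrow> 'a::real_normed_vector) \<Rightarrow> real) \<Rightarrow> (int \<Rightarrow> 'a) set \<Rightarrow> ((int \<Rightarrow> 'a) \<Rightarrow> (int \<Rightarrow> 'a)) \<Rightarrow> bool" where
  "li_yorke_chaotic N X T \<longleftrightarrow>
     (\<exists>S \<subseteq> X. uncountable S \<and> (\<forall>x\<in>S. \<forall>y\<in>S. x \<noteq> y \<longrightarrow> li_yorke_pair N T x y))"

definition irregular_vector ::
  "((int \<Rightarrow> 'a::real_normed_vector) \<Rightarrow> real) \<Rightarrow> ((int \<Rightarrow> 'a) \<Rightarrow> (int \<Rightarrow> 'a)) \<Rightarrow> (int \<Rightarrow> 'a) \<Rightarrow> bool" where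
  "irregular_vector N T x \<longleftrightarrow>
     liminf (\<lambda>n. ereal (N ((T ^^ n) x))) = 0 \<and> limsup (\<lambda>n. ereal (N ((T ^^ n) x))) = \<infinity>"

definition seq_subspace :: "(int \<Rightarrow> 'a::real_normed_field) set \<Rightarrow> (int \<Rightarrow> 'a) set \<Rightarrow> bool" where
  "seq_subspace X M \<longleftrightarrow> M \<subseteq> X \<and> (\<lambda>i. 0) \<in> M \<and>
     (\<forall>x\<in>M. \<forall>y\<in>M. (\<lambda>i. x i + y i) \<in> M) \<and> (\<forall>c. \<forall>x\<in>M. (\<lambda>i. c * x i) \<in> M)"

definition dense_irregular_manifold ::
  "((int \<Rightarrow> 'a::real_normed_field) \<Rightarrow> real) \<Rightarrow> (int \<Rightarrow> 'a) set \<Rightarrow> ((int \<Rightarrow> 'a) \<Rightarrow> (int \<Rightarrow> 'a)) \<Rightarrow> bool" where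
  "dense_irregular_manifold N X T \<longleftrightarrow>
     (\<exists>M. seq_subspace X M \<and> dense_wrt N X M \<and>
          (\<forall>x\<in>M. x \<noteq> (\<lambda>i. 0) \<longrightarrow> irregular_vector N T x))"

definition uniformly_li_yorke_scrambled ::
  "((int \<Rightarrow> 'a::real_normed_vector) \<Rightarrow> real) \<Rightarrow> ((int \<Rightarrow> 'a) \<Rightarrow> (int \<Rightarrow> 'a)) \<Rightarrow> (int \<Rightarrow> 'a) set \<Rightarrow> bool" where
  "uniformly_li_yorke_scrambled N T S \<longleftrightarrow>
     (\<exists>x\<in>S. \<exists>y\<in>S. x \<noteq> y) \<and>
     (\<exists>p q :: nat \<Rightarrow> nat. \<forall>x\<in>S. \<forall>y\<in>S. x \<noteq> y \<longrightarrow>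
        ((\<lambda>n. N (\<lambda>i. (T ^^ p n) x i - (T ^^ p n) y i)) \<longlonglongrightarrow> 0) \<and>
        filterlim (\<lambda>n. N (\<lambda>i. (T ^^ q n) x i - (T ^^ q n) y i)) at_top sequentially)"

definition densely_uniformly_li_yorke_chaotic ::
  "((int \<Rightarrow> 'a::real_normed_vector) \<Rightarrow> real) \<Rightarrow> (int \<Rightarrow> 'a) set \<Rightarrow> ((int \<Rightarrow> 'a) \<Rightarrow> (int \<Rightarrow> 'a)) \<Rightarrow> bool" where
  "densely_uniformly_li_yorke_chaotic N X T \<longleftrightarrow>
     (\<exists>S. dense_wrt N X S \<and> uncountable S \<and> uniformly_li_yorke_scrambled N T S)"

end

theory Submission
  imports Defs
begin


definition good_space :: "(int \<Rightarrow> 'a::real_normed_field) set \<Rightarrow> ((int \<Rightarrow> 'a) \<Rightarrow> real) \<Rightarrow> bool" where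
"good_space X N \<longleftrightarrow>
 (\<forall>x\<in>X. \<forall>i. norm (x i) \<le> N x) \<and>
 (\<exists>K\<ge>1. \<forall>x\<in>X. \<forall>y\<in>X. (\<lambda>i. x i + y i) \<in> X \<and> N (\<lambda>i. x i + y i) \<le> K * (N x + N y)) \<and>
 (\<forall>a b c s. b \<in> X \<longrightarrow> c \<ge> 0 \<longrightarrow> (\<forall>i. norm (a i) \<le> c * norm (b (i + s))) \<longrightarrow> a \<in> X \<and> N a \<le> c * N b) \<and>
 (\<forall>x\<in>X. \<forall>e>0. \<exists>F. finite F \<and> N (\<lambda>i. if i \<in> F then 0 else x i) < e) \<and>
 (\<forall>e>0. \<exists>d>0. \<forall>v (\<beta>::nat\<Rightarrow>int). inj \<beta> \<longrightarrow> (\<forall>j. j \<notin> range \<beta> \<longrightarrow> v j = 0) \<longrightarrow>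
     summable (\<lambda>k. norm (v (\<beta> k))) \<longrightarrow> (\<Sum>k. norm (v (\<beta> k))) \<le> d \<longrightarrow> v \<in> X \<and> N v \<le> e)"

lemma c0_iff: "x \<in> c0_space \<longleftrightarrow> (\<forall>e>0. finite {i. e \<le> norm (x i)})"
  unfolding c0_space_def tendsto_iff eventually_cofinite by (simp add: not_less)

lemma c0_bdd:
  assumes "x \<in> c0_space" shows "bdd_above (range (\<lambda>i. norm (x i)))"
proof -
  have f: "finite {i. 1 \<le> norm (x i)}" using assms unfolding c0_iff by (metis zero_less_one)
  let ?M = "max 1 (Max ((\<lambda>i. norm (x i)) ` {i. 1 \<le> norm (x i)}))"
  have "norm (x i) \<le> ?M" for i
  proof (cases "1 \<le> norm (x i)")
    case True then show ?thesis using f by (auto intro!: Max_ge max.coboundedI2)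
  qed auto
  then show ?thesis by (auto intro!: bdd_aboveI)
qed

lemma c0_le_sup: "x \<in> c0_space \<Longrightarrow> norm (x i) \<le> sup_norm x"
  unfolding sup_norm_def by (rule cSUP_upper) (auto intro: c0_bdd)

lemma sup_norm_le: "(\<And>i. norm (x i) \<le> c) \<Longrightarrow> sup_norm x \<le> c"
  unfolding sup_norm_def by (rule cSUP_least) auto

lemma finite_small_seq:
  fixes f :: "nat \<Rightarrow> real"
  assumes "f \<longlonglongrightarrow> 0" "e > 0" shows "finite {k. e \<le> f k}"
proof -
  from assms have "eventually (\<lambda>k. dist (f k) 0 < e) sequentially" by (simp add: tendsto_iff)
  then obtain M where "\<And>k. k \<ge> M \<Longrightarrow> \<bar>f k\<bar> < e" by (auto simp: eventually_sequentially)
  then have "{k. e \<le> f k} \<subseteq> {..<M}"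
  proof (intro subsetI)
    fix k assume h: "\<And>k. k \<ge> M \<Longrightarrow> \<bar>f k\<bar> < e" and k: "k \<in> {k. e \<le> f k}"
    show "k \<in> {..<M}"
    proof (rule ccontr)
      assume "k \<notin> {..<M}" then have "\<bar>f k\<bar> < e" using h by auto
      then show False using k by auto
    qed
  qed
  then show ?thesis using finite_subset by blast
qed

lemma good_c0: "good_space (c0_space :: (int \<Rightarrow> 'a::real_normed_field) set) sup_norm"
  unfolding good_space_def
proof (intro conjI)
  show "\<forall>x\<in>c0_space. \<forall>i. norm (x i) \<le> sup_norm (x :: int \<Rightarrow> 'a)" using c0_le_sup by blast
  show "\<exists>K\<ge>1. \<forall>x\<in>c0_space. \<forall>y\<in>c0_space. (\<lambda>i. x i + y i) \<in> c0_space \<and>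
      sup_norm (\<lambda>i. x i + y i) \<le> K * (sup_norm x + sup_norm (y :: int \<Rightarrow> 'a))"
  proof (intro exI[of _ 1] conjI ballI order.refl)
    fix x y :: "int \<Rightarrow> 'a" assume x: "x \<in> c0_space" and y: "y \<in> c0_space"
    show "(\<lambda>i. x i + y i) \<in> c0_space" unfolding c0_iff
    proof (intro allI impI)
      fix e :: real assume e: "e > 0"
      have "{i. e \<le> norm (x i + y i)} \<subseteq> {i. e/2 \<le> norm (x i)} \<union> {i. e/2 \<le> norm (y i)}"
      proof
        fix i assume "i \<in> {i. e \<le> norm (x i + y i)}"
        then have "e \<le> norm (x i) + norm (y i)" using norm_triangle_ineq[of "x i" "y i"] by auto
        then show "i \<in> {i. e/2 \<le> norm (x i)} \<union> {i. e/2 \<le> norm (y i)}" by auto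
      qed
      moreover have "finite ({i. e/2 \<le> norm (x i)} \<union> {i. e/2 \<le> norm (y i)})"
        using x y e unfolding c0_iff by (meson finite_Un half_gt_zero)
      ultimately show "finite {i. e \<le> norm (x i + y i)}" using finite_subset by blast
    qed
    show "sup_norm (\<lambda>i. x i + y i) \<le> 1 * (sup_norm x + sup_norm y)"
    proof -
      have "sup_norm (\<lambda>i. x i + y i) \<le> sup_norm x + sup_norm y"
      proof (rule sup_norm_le)
        fix i show "norm (x i + y i) \<le> sup_norm x + sup_norm y"
          using norm_triangle_ineq[of "x i" "y i"] c0_le_sup[OF x, of i] c0_le_sup[OF y, of i] by linarith
      qed
      then show ?thesis by simp
    qed
  qed
  show "\<forall>(a :: int \<Rightarrow> 'a) (b :: int \<Rightarrow> 'a) c s. b \<in> c0_space \<longrightarrow> 0 \<le> c \<longrightarrow> (\<forall>i. norm (a i) \<le> c * norm (b (i + s))) \<longrightarrow>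
      a \<in> c0_space \<and> sup_norm a \<le> c * sup_norm b"
  proof (intro allI impI conjI)
    fix a b :: "int \<Rightarrow> 'a" and c :: real and s
    assume b: "b \<in> c0_space" and c: "0 \<le> c" and ab: "\<forall>i. norm (a i) \<le> c * norm (b (i + s))"
    show "a \<in> c0_space" unfolding c0_iff
    proof (intro allI impI)
      fix e :: real assume e: "e > 0"
      show "finite {i. e \<le> norm (a i)}"
      proof (cases "c = 0")
        case True
        then have "{i. e \<le> norm (a i)} = {}" using ab e by (auto simp: not_le intro: le_less_trans)
        then show ?thesis by simp
      next
        case False
        then have cp: "c > 0" using c by simp
        have "{i. e \<le> norm (a i)} \<subseteq> (\<lambda>j. j - s) ` {j. e / c \<le> norm (b j)}"
        proof
          fix i assume "i \<in> {i. e \<le> norm (a i)}"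
          then have "e \<le> c * norm (b (i + s))" using ab order.trans by fastforce
          then have "e / c \<le> norm (b (i + s))" using cp by (simp add: divide_le_eq mult.commute)
          then show "i \<in> (\<lambda>j. j - s) ` {j. e / c \<le> norm (b j)}" by (auto intro!: image_eqI[of _ _ "i + s"])
        qed
        moreover have "finite {j. e / c \<le> norm (b j)}" using b cp e unfolding c0_iff by (meson divide_pos_pos)
        ultimately show ?thesis using finite_subset by blast
      qed
    qed
    show "sup_norm a \<le> c * sup_norm b"
    proof (rule sup_norm_le)
      fix i
      have "norm (a i) \<le> c * norm (b (i + s))" using ab by blast
      also have "\<dots> \<le> c * sup_norm b" by (rule mult_left_mono[OF c0_le_sup[OF b] c])
      finally show "norm (a i) \<le> c * sup_norm b" .
    qed
  qed
  show "\<forall>x\<in>c0_space. \<forall>e>0. \<exists>F. finite F \<and> sup_norm (\<lambda>i. if i \<in> F then 0 else (x :: int \<Rightarrow> 'a) i) < e"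
  proof (intro ballI allI impI)
    fix x :: "int \<Rightarrow> 'a" and e :: real assume x: "x \<in> c0_space" and e: "e > 0"
    have "e/2 > 0" using e by simp
    then have "finite {i. e/2 \<le> norm (x i)}" using x unfolding c0_iff by blast
    moreover have "sup_norm (\<lambda>i. if i \<in> {i. e/2 \<le> norm (x i)} then 0 else x i) \<le> e/2"
      by (rule sup_norm_le) (auto simp: not_le e less_imp_le)
    ultimately show "\<exists>F. finite F \<and> sup_norm (\<lambda>i. if i \<in> F then 0 else x i) < e" using e by force
  qed
  show "\<forall>e>0. \<exists>d>0. \<forall>(v :: int \<Rightarrow> 'a) (\<beta>::nat\<Rightarrow>int). inj \<beta> \<longrightarrow> (\<forall>j. j \<notin> range \<beta> \<longrightarrow> v j = 0) \<longrightarrow>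
     summable (\<lambda>k. norm (v (\<beta> k))) \<longrightarrow> (\<Sum>k. norm (v (\<beta> k))) \<le> d \<longrightarrow> v \<in> c0_space \<and> sup_norm v \<le> e"
  proof (intro allI impI exI[of _ "_"] conjI)
    fix e :: real assume e: "e > 0"
    show "e > 0" by fact
    fix v :: "int \<Rightarrow> 'a" and \<beta> :: "nat \<Rightarrow> int"
    assume inj: "inj \<beta>" and z: "\<forall>j. j \<notin> range \<beta> \<longrightarrow> v j = 0" and s: "summable (\<lambda>k. norm (v (\<beta> k)))"
      and le: "(\<Sum>k. norm (v (\<beta> k))) \<le> e"
    have single: "norm (v (\<beta> k)) \<le> (\<Sum>k. norm (v (\<beta> k)))" for k
      using sum_le_suminf[OF s, of "{k}"] by auto
    show "v \<in> c0_space" unfolding c0_iff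
    proof (intro allI impI)
      fix \<eta> :: real assume \<eta>: "\<eta> > 0"
      have "{i. \<eta> \<le> norm (v i)} \<subseteq> \<beta> ` {k. \<eta> \<le> norm (v (\<beta> k))}"
        using z \<eta> by (force simp: not_le)
      moreover have "finite {k. \<eta> \<le> norm (v (\<beta> k))}"
        using finite_small_seq[OF summable_LIMSEQ_zero[OF s] \<eta>] .
      ultimately show "finite {i. \<eta> \<le> norm (v i)}" using finite_subset by blast
    qed
    show "sup_norm v \<le> e"
    proof (rule sup_norm_le)
      fix i show "norm (v i) \<le> e"
      proof (cases "i \<in> range \<beta>")
        case True then obtain k where "i = \<beta> k" by auto
        then show ?thesis using single[of k] le by simp
      qed (use z e in auto)
    qed
  qed
qed



lemma powr_cancel: "0 \<le> (a::real) \<Longrightarrow> p > 0 \<Longrightarrow> (a powr p) powr (1/p) = a"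
  by (simp add: powr_powr)

lemma lp_nonneg_sum: "0 \<le> infsum (\<lambda>i. norm (x i) powr p) A"
  by (rule infsum_nonneg) simp

lemma lp_le:
  assumes "p \<ge> 1" "x \<in> lp_space p" shows "norm (x i) \<le> lp_norm p x"
proof -
  have s: "(\<lambda>i. norm (x i) powr p) summable_on UNIV" using assms by (simp add: lp_space_def)
  have "norm (x i) powr p \<le> infsum (\<lambda>i. norm (x i) powr p) UNIV"
    using finite_sum_le_infsum[OF s, of "{i}"] by simp
  then have "(norm (x i) powr p) powr (1/p) \<le> (infsum (\<lambda>i. norm (x i) powr p) UNIV) powr (1/p)"
    using assms by (intro powr_mono2) auto
  then show ?thesis using assms by (simp add: powr_cancel lp_norm_def)
qed

lemma lp_dom:
  assumes p: "p \<ge> 1" and b: "b \<in> lp_space p" and c: "c \<ge> 0"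
    and ab: "\<And>i. norm (a i) \<le> c * norm (b (i + s))"
  shows "a \<in> lp_space p \<and> lp_norm p a \<le> c * lp_norm p b"
proof -
  have sb: "(\<lambda>i. norm (b i) powr p) summable_on UNIV" using b by (simp add: lp_space_def)
  have bij: "bij_betw (\<lambda>i. i + s) UNIV UNIV"
    by (rule bij_betw_byWitness[where f'="\<lambda>i. i - s"]) auto
  have sb': "(\<lambda>i. norm (b (i + s)) powr p) summable_on UNIV"
    using summable_on_reindex_bij_betw[OF bij, of "\<lambda>i. norm (b i) powr p"] sb by simp
  have eq: "infsum (\<lambda>i. norm (b (i + s)) powr p) UNIV = infsum (\<lambda>i. norm (b i) powr p) UNIV"
    using infsum_reindex_bij_betw[OF bij, of "\<lambda>i. norm (b i) powr p"] by simp
  have le: "norm (a i) powr p \<le> c powr p * norm (b (i + s)) powr p" for i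
  proof -
    have "norm (a i) powr p \<le> (c * norm (b (i + s))) powr p"
      using ab[of i] p by (intro powr_mono2) auto
    also have "\<dots> = c powr p * norm (b (i + s)) powr p" using c by (simp add: powr_mult)
    finally show ?thesis .
  qed
  have sc: "(\<lambda>i. c powr p * norm (b (i + s)) powr p) summable_on UNIV"
    using sb' by (rule summable_on_cmult_right)
  have sa: "(\<lambda>i. norm (a i) powr p) summable_on UNIV"
    by (rule summable_on_comparison_test[OF sc]) (use le in auto)
  have "infsum (\<lambda>i. norm (a i) powr p) UNIV \<le> infsum (\<lambda>i. c powr p * norm (b (i + s)) powr p) UNIV"
    by (rule infsum_mono[OF sa sc le])
  also have "\<dots> = c powr p * infsum (\<lambda>i. norm (b i) powr p) UNIV"
    using eq by (simp add: infsum_cmult_right')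
  finally have "lp_norm p a \<le> (c powr p * infsum (\<lambda>i. norm (b i) powr p) UNIV) powr (1/p)"
    unfolding lp_norm_def using p by (intro powr_mono2) (auto intro: lp_nonneg_sum)
  also have "\<dots> = c * lp_norm p b"
    using c p by (simp add: powr_mult lp_nonneg_sum powr_cancel lp_norm_def)
  finally show ?thesis using sa by (simp add: lp_space_def)
qed



lemma max_powr_le: "0 \<le> (a::real) \<Longrightarrow> 0 \<le> b \<Longrightarrow> 0 \<le> q \<Longrightarrow> (max a b) powr q \<le> a powr q + b powr q"
  using powr_ge_zero[of a q] powr_ge_zero[of b q] by (cases "a \<le> b") (auto simp: max_def)

lemma lp_add:
  assumes p: "p \<ge> 1" and x: "x \<in> lp_space p" and y: "y \<in> lp_space p"
  shows "(\<lambda>i. x i + y i) \<in> lp_space p \<and> lp_norm p (\<lambda>i. x i + y i) \<le> 4 * (lp_norm p x + lp_norm p y)"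
proof -
  define Sx where "Sx = infsum (\<lambda>i. norm (x i) powr p) UNIV"
  define Sy where "Sy = infsum (\<lambda>i. norm (y i) powr p) UNIV"
  have sx: "(\<lambda>i. norm (x i) powr p) summable_on UNIV" using x by (simp add: lp_space_def)
  have sy: "(\<lambda>i. norm (y i) powr p) summable_on UNIV" using y by (simp add: lp_space_def)
  have Sx0: "Sx \<ge> 0" and Sy0: "Sy \<ge> 0" unfolding Sx_def Sy_def by (auto intro: lp_nonneg_sum)
  have le: "norm (x i + y i) powr p \<le> 2 powr p * (norm (x i) powr p + norm (y i) powr p)" for i
  proof -
    have "norm (x i + y i) \<le> 2 * max (norm (x i)) (norm (y i))"
      using norm_triangle_ineq[of "x i" "y i"] by linarith
    then have "norm (x i + y i) powr p \<le> (2 * max (norm (x i)) (norm (y i))) powr p"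
      using p by (intro powr_mono2) auto
    also have "\<dots> = 2 powr p * (max (norm (x i)) (norm (y i))) powr p" by (simp add: powr_mult)
    also have "\<dots> \<le> 2 powr p * (norm (x i) powr p + norm (y i) powr p)"
      using p by (intro mult_left_mono max_powr_le) auto
    finally show ?thesis .
  qed
  have sc: "(\<lambda>i. 2 powr p * (norm (x i) powr p + norm (y i) powr p)) summable_on UNIV"
    by (intro summable_on_cmult_right summable_on_add sx sy)
  have sxy: "(\<lambda>i. norm (x i + y i) powr p) summable_on UNIV"
    by (rule summable_on_comparison_test[OF sc]) (use le in auto)
  have "infsum (\<lambda>i. norm (x i + y i) powr p) UNIV \<le> infsum (\<lambda>i. 2 powr p * (norm (x i) powr p + norm (y i) powr p)) UNIV"
    by (rule infsum_mono[OF sxy sc le])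
  also have "\<dots> = 2 powr p * (Sx + Sy)"
    unfolding Sx_def Sy_def by (simp add: infsum_cmult_right' infsum_add sx sy)
  finally have "lp_norm p (\<lambda>i. x i + y i) \<le> (2 powr p * (Sx + Sy)) powr (1/p)"
    unfolding lp_norm_def using p by (intro powr_mono2) (auto intro: lp_nonneg_sum)
  also have "\<dots> = 2 * (Sx + Sy) powr (1/p)"
    using p Sx0 Sy0 by (simp add: powr_mult powr_cancel)
  also have "(Sx + Sy) powr (1/p) \<le> (2 * max Sx Sy) powr (1/p)"
    using p Sx0 Sy0 by (intro powr_mono2) auto
  also have "\<dots> = 2 powr (1/p) * max Sx Sy powr (1/p)"
    using Sx0 Sy0 by (simp add: powr_mult)
  also have "\<dots> \<le> 2 * (Sx powr (1/p) + Sy powr (1/p))"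
  proof (rule mult_mono)
    show "2 powr (1/p) \<le> 2" using powr_mono[of "1/p" 1 2] p by simp
    show "max Sx Sy powr (1/p) \<le> Sx powr (1/p) + Sy powr (1/p)"
      using Sx0 Sy0 p by (intro max_powr_le) auto
  qed auto
  finally have "lp_norm p (\<lambda>i. x i + y i) \<le> 2 * (2 * (Sx powr (1/p) + Sy powr (1/p)))" by simp
  then show ?thesis using sxy by (simp add: lp_space_def lp_norm_def Sx_def Sy_def)
qed

lemma lp_tail:
  assumes p: "p \<ge> 1" and x: "x \<in> lp_space p" and e: "e > 0"
  shows "\<exists>F. finite F \<and> lp_norm p (\<lambda>i. if i \<in> F then 0 else x i) < e"
proof -
  define f where "f = (\<lambda>i. norm (x i) powr p)"
  have sf: "f summable_on UNIV" using x by (simp add: lp_space_def f_def)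
  define \<eta> where "\<eta> = (e/2) powr p"
  have \<eta>: "\<eta> > 0" using e by (simp add: \<eta>_def)
  obtain F where F: "finite F" "dist (sum f F) (infsum f UNIV) \<le> \<eta>"
    using infsum_finite_approximation[OF sf \<eta>] by auto
  have "infsum (\<lambda>i. norm (if i \<in> F then 0 else x i) powr p) UNIV = infsum f (UNIV - F)"
    by (rule infsum_cong_neutral) (auto simp: f_def)
  also have "\<dots> = infsum f UNIV - infsum f F"
    using F(1) sf by (intro infsum_Diff) auto
  also have "\<dots> \<le> \<eta>" using F by (simp add: dist_real_def)
  finally have "lp_norm p (\<lambda>i. if i \<in> F then 0 else x i) \<le> \<eta> powr (1/p)"
    unfolding lp_norm_def using p by (intro powr_mono2) (auto intro: lp_nonneg_sum)
  also have "\<dots> = e/2" using e p by (simp add: \<eta>_def powr_cancel)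
  finally show ?thesis using F e by (intro exI[of _ F]) auto
qed

lemma infsum_nat_suminf:
  fixes g :: "nat \<Rightarrow> real"
  assumes "summable g" "\<And>k. g k \<ge> 0" shows "infsum g UNIV = suminf g"
proof -
  have "g summable_on UNIV" using assms summable_on_UNIV_nonneg_real_iff by blast
  then have "(g has_sum infsum g UNIV) UNIV" by simp
  then have "g sums infsum g UNIV" by (rule has_sum_imp_sums)
  then show ?thesis by (simp add: sums_iff)
qed

lemma lp_sparse:
  assumes p: "p \<ge> 1" and e: "e > 0"
  shows "\<exists>d>0. \<forall>v (\<beta>::nat\<Rightarrow>int). inj \<beta> \<longrightarrow> (\<forall>j. j \<notin> range \<beta> \<longrightarrow> v j = 0) \<longrightarrow>
     summable (\<lambda>k. norm (v (\<beta> k))) \<longrightarrow> (\<Sum>k. norm (v (\<beta> k))) \<le> d \<longrightarrow> v \<in> lp_space p \<and> lp_norm p v \<le> e"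
proof (intro exI[of _ "min 1 (e powr p)"] conjI allI impI)
  show "0 < min 1 (e powr p)" using e by simp
  fix v :: "int \<Rightarrow> 'a" and \<beta> :: "nat \<Rightarrow> int"
  assume inj: "inj \<beta>" and z: "\<forall>j. j \<notin> range \<beta> \<longrightarrow> v j = 0" and s: "summable (\<lambda>k. norm (v (\<beta> k)))"
    and le: "(\<Sum>k. norm (v (\<beta> k))) \<le> min 1 (e powr p)"
  define f where "f = (\<lambda>i. norm (v i) powr p)"
  define g where "g = (\<lambda>k. norm (v (\<beta> k)))"
  have single: "g k \<le> 1" for k
    using sum_le_suminf[OF s, of "{k}"] le by (auto simp: g_def)
  have fg: "(f \<circ> \<beta>) k \<le> g k" for k
  proof -
    have "norm (v (\<beta> k)) powr p \<le> norm (v (\<beta> k)) powr 1"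
      using single[of k] p by (intro powr_mono') (auto simp: g_def)
    then show ?thesis by (simp add: f_def g_def)
  qed
  have sg: "g summable_on UNIV" using s summable_on_UNIV_nonneg_real_iff by (simp add: g_def)
  have sfb: "(f \<circ> \<beta>) summable_on UNIV"
    by (rule summable_on_comparison_test[OF sg]) (use fg in \<open>auto simp: f_def\<close>)
  have eq1: "f summable_on UNIV \<longleftrightarrow> f summable_on range \<beta>"
    by (rule summable_on_cong_neutral) (use z in \<open>auto simp: f_def\<close>)
  have eq2: "infsum f UNIV = infsum f (range \<beta>)"
    by (rule infsum_cong_neutral) (use z in \<open>auto simp: f_def\<close>)
  have sf: "f summable_on UNIV" using eq1 summable_on_reindex[OF inj, of f] sfb by simp
  have "infsum f UNIV = infsum (f \<circ> \<beta>) UNIV" using eq2 infsum_reindex[OF inj, of f] by simp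
  also have "\<dots> \<le> infsum g UNIV" by (rule infsum_mono[OF sfb sg fg])
  also have "\<dots> = suminf g" using s by (intro infsum_nat_suminf) (auto simp: g_def)
  also have "\<dots> \<le> e powr p" using le by (simp add: g_def)
  finally have "lp_norm p v \<le> (e powr p) powr (1/p)"
    unfolding lp_norm_def f_def using p by (intro powr_mono2) (auto intro: lp_nonneg_sum)
  also have "\<dots> = e" using e p by (simp add: powr_cancel)
  finally show "lp_norm p v \<le> e" .
  show "v \<in> lp_space p" using sf by (simp add: lp_space_def f_def)
qed

lemma good_lp:
  assumes p: "p \<ge> 1"
  shows "good_space (lp_space p :: (int \<Rightarrow> 'a::real_normed_field) set) (lp_norm p)"
  unfolding good_space_def
proof (intro conjI)
  show "\<forall>x\<in>lp_space p. \<forall>i. norm ((x :: int \<Rightarrow> 'a) i) \<le> lp_norm p x" using lp_le p by blast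
  show "\<exists>K\<ge>1. \<forall>x\<in>lp_space p. \<forall>y\<in>lp_space p. (\<lambda>i. x i + y i) \<in> lp_space p \<and>
      lp_norm p (\<lambda>i. x i + y i) \<le> K * (lp_norm p x + lp_norm p (y :: int \<Rightarrow> 'a))"
    using lp_add[OF p] by (intro exI[of _ 4]) auto
  show "\<forall>(a :: int \<Rightarrow> 'a) (b :: int \<Rightarrow> 'a) c s. b \<in> lp_space p \<longrightarrow> 0 \<le> c \<longrightarrow> (\<forall>i. norm (a i) \<le> c * norm (b (i + s))) \<longrightarrow>
      a \<in> lp_space p \<and> lp_norm p a \<le> c * lp_norm p b"
    using lp_dom[OF p] by blast
  show "\<forall>x\<in>lp_space p. \<forall>e>0. \<exists>F. finite F \<and> lp_norm p (\<lambda>i. if i \<in> F then 0 else (x :: int \<Rightarrow> 'a) i) < e"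
    using lp_tail[OF p] by blast
  show "\<forall>e>0. \<exists>d>0. \<forall>(v :: int \<Rightarrow> 'a) (\<beta>::nat\<Rightarrow>int). inj \<beta> \<longrightarrow> (\<forall>j. j \<notin> range \<beta> \<longrightarrow> v j = 0) \<longrightarrow>
     summable (\<lambda>k. norm (v (\<beta> k))) \<longrightarrow> (\<Sum>k. norm (v (\<beta> k))) \<le> d \<longrightarrow> v \<in> lp_space p \<and> lp_norm p v \<le> e"
    using lp_sparse[OF p] by blast
qed



lemma Tpow: "(bw_shift w ^^ n) x i = (\<Prod>t<n. w (i + 1 + int t)) * x (i + int n)"
proof (induction n arbitrary: i)
  case 0 then show ?case by simp
next
  case (Suc n)
  have "(bw_shift w ^^ Suc n) x i = w (i + 1) * (bw_shift w ^^ n) x (i + 1)"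
    by (simp add: bw_shift_def)
  also have "\<dots> = w (i + 1) * ((\<Prod>t<n. w (i + 1 + 1 + int t)) * x (i + 1 + int n))"
    using Suc by simp
  also have "\<dots> = (\<Prod>t<Suc n. w (i + 1 + int t)) * x (i + int (Suc n))"
  proof -
    have "(\<Prod>t<Suc n. w (i + 1 + int t)) = w (i + 1 + int 0) * (\<Prod>t<n. w (i + 1 + int (Suc t)))"
      by (rule prod.lessThan_Suc_shift)
    moreover have "(\<Prod>t<n. w (i + 1 + int (Suc t))) = (\<Prod>t<n. w (i + 1 + 1 + int t))"
      by (simp add: ac_simps)
    ultimately show ?thesis by (simp add: ac_simps)
  qed
  finally show ?case .
qed

definition V :: "(int \<Rightarrow> 'a::real_normed_field) \<Rightarrow> int \<Rightarrow> nat \<Rightarrow> real" where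
  "V w a n = (\<Prod>t<n. norm (w (a + int t)))"

lemma norm_Tpow: "norm ((bw_shift w ^^ n) x i) = V w (i + 1) n * norm (x (i + int n))"
  by (simp add: Tpow V_def norm_mult prod_norm[symmetric])

lemma Tpow_diff: "(bw_shift w ^^ n) x i - (bw_shift w ^^ n) y i = (bw_shift w ^^ n) (\<lambda>j. x j - y j) i"
  by (simp add: Tpow right_diff_distrib)

lemma V_add: "V w a (n + m) = V w a n * V w (a + int n) m"
  by (induction m) (simp_all add: V_def ac_simps)

lemma V_Suc: "V w a (Suc n) = norm (w a) * V w (a + 1) n"
proof -
  have "V w a (Suc n) = norm (w (a + int 0)) * (\<Prod>t<n. norm (w (a + int (Suc t))))"
    unfolding V_def by (rule prod.lessThan_Suc_shift)
  moreover have "(\<Prod>t<n. norm (w (a + int (Suc t)))) = V w (a + 1) n"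
    unfolding V_def by (simp add: ac_simps)
  ultimately show ?thesis by simp
qed

lemma prod_int_ivl: "(\<Prod>j\<in>{a..a + int n - 1}. f j) = (\<Prod>t<n. f (a + int t))"
proof (induction n)
  case 0 then show ?case by simp
next
  case (Suc n)
  have "{a..a + int (Suc n) - 1} = insert (a + int n) {a..a + int n - 1}" by auto
  then show ?case using Suc by (simp add: ac_simps)
qed

locale wsh =
  fixes X :: "(int \<Rightarrow> 'a::real_normed_field) set" and N :: "(int \<Rightarrow> 'a) \<Rightarrow> real"
    and w :: "int \<Rightarrow> 'a" and B :: real and K :: real
  assumes Nle: "\<And>x i. x \<in> X \<Longrightarrow> norm (x i) \<le> N x"
  and K1: "K \<ge> 1"
  and Nadd: "\<And>x y. x \<in> X \<Longrightarrow> y \<in> X \<Longrightarrow> (\<lambda>i. x i + y i) \<in> X \<and> N (\<lambda>i. x i + y i) \<le> K * (N x + N y)"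
  and Ndom: "\<And>a b c s. b \<in> X \<Longrightarrow> c \<ge> 0 \<Longrightarrow> (\<And>i. norm (a i) \<le> c * norm (b (i + s))) \<Longrightarrow> a \<in> X \<and> N a \<le> c * N b"
  and Ntail: "\<And>x e. x \<in> X \<Longrightarrow> e > 0 \<Longrightarrow> \<exists>F. finite F \<and> N (\<lambda>i. if i \<in> F then 0 else x i) < e"
  and Nsparse: "\<And>e. e > 0 \<Longrightarrow> \<exists>d>0. \<forall>v (\<beta>::nat\<Rightarrow>int). inj \<beta> \<longrightarrow> (\<forall>j. j \<notin> range \<beta> \<longrightarrow> v j = 0) \<longrightarrow>
     summable (\<lambda>k. norm (v (\<beta> k))) \<longrightarrow> (\<Sum>k. norm (v (\<beta> k))) \<le> d \<longrightarrow> v \<in> X \<and> N v \<le> e"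
  and B1: "B \<ge> 1" and wB: "\<And>j. norm (w j) \<le> B" and wnz: "\<And>j. w j \<noteq> 0"
begin

abbreviation "T \<equiv> bw_shift w"
abbreviation "VV \<equiv> V w"
definition ob :: "int \<Rightarrow> nat \<Rightarrow> real" where "ob b p = V w (b - int p + 1) p"

lemma V_pos: "VV a n > 0"
  unfolding V_def using wnz by (auto intro: prod_pos)

lemma V_le: "VV a n \<le> B ^ n"
proof -
  have "VV a n \<le> (\<Prod>t<n. B)" unfolding V_def by (intro prod_mono) (auto simp: wB)
  then show ?thesis by simp
qed

lemma ob_pos: "ob b p > 0" by (simp add: ob_def V_pos)

lemma N_nonneg: "x \<in> X \<Longrightarrow> N x \<ge> 0"
  using Nle[of x 0] norm_ge_zero order.trans by blast

lemma sparse_mem: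
  assumes "inj \<beta>" "\<forall>j. j \<notin> range \<beta> \<longrightarrow> v j = 0" "summable (\<lambda>k. norm (v (\<beta> k)))"
  shows "v \<in> X"
proof -
  obtain d where d: "d > 0" and H: "\<forall>v (\<beta>::nat\<Rightarrow>int). inj \<beta> \<longrightarrow> (\<forall>j. j \<notin> range \<beta> \<longrightarrow> v j = 0) \<longrightarrow>
     summable (\<lambda>k. norm (v (\<beta> k))) \<longrightarrow> (\<Sum>k. norm (v (\<beta> k))) \<le> d \<longrightarrow> v \<in> X \<and> N v \<le> 1"
    using Nsparse[of 1] by auto
  define S where "S = (\<Sum>k. norm (v (\<beta> k)))"
  have S0: "S \<ge> 0" unfolding S_def using assms(3) by (intro suminf_nonneg) auto
  define t where "t = d / (S + 1)"
  have t: "t > 0" using d S0 by (simp add: t_def)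
  define v' where "v' = (\<lambda>j. of_real t * v j)"
  have "summable (\<lambda>k. t * norm (v (\<beta> k)))" using assms(3) by (rule summable_mult)
  moreover have "(\<Sum>k. t * norm (v (\<beta> k))) = t * S"
    unfolding S_def using assms(3) by (rule suminf_mult)
  moreover have "t * S \<le> d"
    using d S0 by (simp add: t_def field_simps)
  ultimately have "v' \<in> X"
    using H assms(1,2) t by (auto simp: v'_def norm_mult)
  moreover have "norm (v i) \<le> (1/t) * norm (v' (i + 0))" for i
    using t by (simp add: v'_def norm_mult)
  ultimately show ?thesis using Ndom[of v' "1/t" v 0] t by auto
qed

lemma zero_mem: "(\<lambda>i. 0) \<in> X" and N_zero: "N (\<lambda>i. 0) = 0"
proof -
  show z: "(\<lambda>i. 0) \<in> X" by (rule sparse_mem[of "\<lambda>k. int k"]) (auto simp: inj_def)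
  have "N (\<lambda>i. 0) \<le> 0 * N (\<lambda>i. 0)" by (rule conjunct2[OF Ndom[OF z]]) auto
  then show "N (\<lambda>i. 0) = 0" using N_nonneg[OF z] by simp
qed

lemma scal_mem: "x \<in> X \<Longrightarrow> (\<lambda>i. c * x i) \<in> X \<and> N (\<lambda>i. c * x i) \<le> norm c * N x"
  using Ndom[of x "norm c" "\<lambda>i. c * x i" 0] by (simp add: norm_mult)

lemma Tpow_mem: "x \<in> X \<Longrightarrow> (T ^^ n) x \<in> X \<and> N ((T ^^ n) x) \<le> B ^ n * N x"
  using B1 by (intro Ndom) (auto simp: norm_Tpow intro!: mult_right_mono V_le)

lemma sum_mem:
  assumes "finite F" "\<And>m. m \<in> F \<Longrightarrow> f m \<in> X"
  shows "(\<lambda>i. \<Sum>m\<in>F. f m i) \<in> X \<and> N (\<lambda>i. \<Sum>m\<in>F. f m i) \<le> K ^ card F * (\<Sum>m\<in>F. N (f m))"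
  using assms
proof (induction F rule: finite_induct)
  case empty then show ?case using zero_mem N_zero by simp
next
  case (insert a F)
  let ?S = "\<lambda>i. \<Sum>m\<in>F. f m i"
  have IH: "?S \<in> X" "N ?S \<le> K ^ card F * (\<Sum>m\<in>F. N (f m))" using insert by auto
  have fa: "f a \<in> X" using insert by auto
  have eq: "(\<lambda>i. \<Sum>m\<in>insert a F. f m i) = (\<lambda>i. f a i + ?S i)" using insert by simp
  have mem: "(\<lambda>i. f a i + ?S i) \<in> X" and le1: "N (\<lambda>i. f a i + ?S i) \<le> K * (N (f a) + N ?S)"
    using Nadd[OF fa IH(1)] by auto
  have s0: "(\<Sum>m\<in>F. N (f m)) \<ge> 0" using insert N_nonneg by (auto intro: sum_nonneg)
  have "K * (N (f a) + N ?S) \<le> K * (K ^ card F * N (f a) + K ^ card F * (\<Sum>m\<in>F. N (f m)))"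
  proof (intro mult_left_mono add_mono IH(2))
    show "N (f a) \<le> K ^ card F * N (f a)"
      using N_nonneg[OF fa] K1 by (simp add: mult_le_cancel_right1 one_le_power)
  qed (use K1 in auto)
  also have "\<dots> = K ^ card (insert a F) * (\<Sum>m\<in>insert a F. N (f m))"
    using insert by (simp add: algebra_simps)
  finally show ?case using eq mem le1 by simp
qed

definition unit :: "int \<Rightarrow> int \<Rightarrow> 'a" where "unit m = (\<lambda>i. if i = m then 1 else 0)"

lemma unit_mem: "unit m \<in> X"
proof (rule sparse_mem[of "\<lambda>k. m + int k"])
  show "inj (\<lambda>k. m + int k)" by (auto simp: inj_def)
  show "\<forall>j. j \<notin> range (\<lambda>k. m + int k) \<longrightarrow> unit m j = 0" by (auto simp: unit_def)
  have "(\<lambda>k. norm (unit m (m + int k))) = (\<lambda>k. if k = 0 then 1 else 0)" by (auto simp: unit_def)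
  then show "summable (\<lambda>k. norm (unit m (m + int k)))" by simp
qed

end


context wsh begin

lemma ob_R1: "ob b (p + s) \<le> B ^ s * ob b p"
proof -
  have "ob b (p + s) = VV (b - int (p + s) + 1) (s + p)" by (simp add: ob_def add.commute)
  also have "\<dots> = VV (b - int (p + s) + 1) s * VV (b - int (p + s) + 1 + int s) p" by (rule V_add)
  also have "VV (b - int (p + s) + 1 + int s) p = ob b p" unfolding ob_def by (simp add: algebra_simps)
  finally have "ob b (p + s) = VV (b - int (p + s) + 1) s * ob b p" .
  also have "\<dots> \<le> B ^ s * ob b p" using ob_pos[of b p] by (intro mult_right_mono V_le) auto
  finally show ?thesis .
qed

lemma ob_R2: "ob (b + int k) (p + k) = VV (b + 1) k * ob b p"
proof -
  have "ob (b + int k) (p + k) = VV (b - int p + 1) (p + k)" by (simp add: ob_def)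
  also have "\<dots> = VV (b - int p + 1) p * VV (b - int p + 1 + int p) k" by (rule V_add)
  finally show ?thesis by (simp add: ob_def)
qed

lemma ob_le: "ob b p \<le> B ^ p" by (simp add: ob_def V_le)

lemma ob_shift_bound:
  fixes \<beta> :: nat
  assumes "\<bar>b\<bar> \<le> int \<beta>"
  shows "\<exists>C>0. \<forall>n\<ge>\<beta>. ob b (n + \<beta>) \<le> C * ob 0 n"
proof (cases "b \<ge> 0")
  case True
  then obtain k where k: "b = int k" using nonneg_int_cases by blast
  have kb: "k \<le> \<beta>" using assms k by simp
  show ?thesis
  proof (intro exI[of _ "B ^ (\<beta> - k) * VV 1 k"] conjI allI impI)
    show "0 < B ^ (\<beta> - k) * VV 1 k" using B1 V_pos by simp
    fix n assume "n \<ge> \<beta>"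
    have "ob b (n + \<beta>) = ob b ((n + k) + (\<beta> - k))" using kb by simp
    also have "\<dots> \<le> B ^ (\<beta> - k) * ob b (n + k)" by (rule ob_R1)
    also have "ob b (n + k) = VV 1 k * ob 0 n" using ob_R2[of 0 k n] k by simp
    finally show "ob b (n + \<beta>) \<le> B ^ (\<beta> - k) * VV 1 k * ob 0 n" by (simp add: mult.assoc)
  qed
next
  case False
  then obtain k where k: "b = - int k" by (metis nonneg_int_cases neg_0_le_iff_le linorder_linear minus_minus)
  have kb: "k \<le> \<beta>" using assms k by simp
  show ?thesis
  proof (intro exI[of _ "B ^ (\<beta> + k) / VV (b + 1) k"] conjI allI impI)
    show "0 < B ^ (\<beta> + k) / VV (b + 1) k" using B1 V_pos by simp
    fix n assume n: "n \<ge> \<beta>"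
    have "ob 0 n = ob (b + int k) ((n - k) + k)" using k kb n by simp
    also have "\<dots> = VV (b + 1) k * ob b (n - k)" by (rule ob_R2)
    finally have e: "ob b (n - k) = ob 0 n / VV (b + 1) k" using V_pos[of "b+1" k] by (simp add: field_simps)
    have "ob b (n + \<beta>) = ob b ((n - k) + (\<beta> + k))" using kb n by simp
    also have "\<dots> \<le> B ^ (\<beta> + k) * ob b (n - k)" by (rule ob_R1)
    finally show "ob b (n + \<beta>) \<le> B ^ (\<beta> + k) / VV (b + 1) k * ob 0 n" using e by simp
  qed
qed

lemma common_small:
  assumes freq: "\<And>e P0. e > 0 \<Longrightarrow> \<exists>n\<ge>P0. ob 0 n < e"
    and fin: "finite Bs" and e: "e > 0"
  shows "\<exists>p\<ge>P0. \<forall>b\<in>Bs. ob b p \<le> e"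
proof -
  obtain \<beta> where \<beta>: "\<forall>m\<in>(\<lambda>b. nat \<bar>b\<bar>) ` Bs. m \<le> \<beta>"
    using fin finite_nat_set_iff_bounded_le by blast
  have "\<forall>b\<in>Bs. \<exists>C>0. \<forall>n\<ge>\<beta>. ob b (n + \<beta>) \<le> C * ob 0 n"
    using \<beta> by (intro ballI ob_shift_bound) auto
  then obtain C where C: "\<And>b. b \<in> Bs \<Longrightarrow> C b > 0 \<and> (\<forall>n\<ge>\<beta>. ob b (n + \<beta>) \<le> C b * ob 0 n)"
    by metis
  define D where "D = 1 + (\<Sum>b\<in>Bs. C b)"
  have D: "D > 0" "\<And>b. b \<in> Bs \<Longrightarrow> C b \<le> D"
  proof -
    have "(\<Sum>b\<in>Bs. C b) \<ge> 0" using C by (auto intro: sum_nonneg less_imp_le)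
    then show "D > 0" by (simp add: D_def)
    fix b assume b: "b \<in> Bs"
    have "C b \<le> (\<Sum>b\<in>Bs. C b)" using C b fin by (intro member_le_sum) (auto intro: less_imp_le)
    then show "C b \<le> D" by (simp add: D_def)
  qed
  obtain n where n: "n \<ge> max \<beta> P0" "ob 0 n < e / D" using freq[of "e / D" "max \<beta> P0"] e D by auto
  show ?thesis
  proof (intro exI[of _ "n + \<beta>"] conjI ballI)
    show "P0 \<le> n + \<beta>" using n by simp
    fix b assume b: "b \<in> Bs"
    have "ob b (n + \<beta>) \<le> C b * ob 0 n" using C[OF b] n by auto
    also have "\<dots> \<le> D * ob 0 n" using D(2)[OF b] ob_pos by (intro mult_right_mono) (auto intro: less_imp_le)
    also have "\<dots> \<le> e" using n D by (simp add: field_simps)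
    finally show "ob b (n + \<beta>) \<le> e" .
  qed
qed

lemma avoid_finite:
  assumes "finite (Bs :: int set)"
  shows "\<exists>s\<le>card Bs. b0 - int s \<notin> Bs"
proof (rule ccontr)
  assume "\<not> ?thesis"
  then have "(\<lambda>s. b0 - int s) ` {..card Bs} \<subseteq> Bs" by auto
  moreover have "inj_on (\<lambda>s. b0 - int s) {..card Bs}" by (auto simp: inj_on_def)
  ultimately have "card {..card Bs} \<le> card Bs" using card_inj_on_le assms by blast
  then show False by simp
qed

lemma big_avoid:
  assumes unb: "\<And>H. \<exists>k n. VV k (Suc n) > H"
    and fin: "finite Bs"
  shows "\<exists>b q. b \<notin> Bs \<and> ob b q \<ge> H"
proof -
  define c where "c = card Bs"
  define H' where "H' = max H 1 * B ^ c"
  obtain k n where kn: "VV k (Suc n) > H'" using unb by blast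
  define q0 where "q0 = Suc n"
  define b0 where "b0 = k + int n"
  have ob0: "ob b0 q0 > H'" using kn by (simp add: ob_def b0_def q0_def)
  have Bc: "B ^ c > 0" using B1 by simp
  have "H' \<ge> B ^ c" unfolding H'_def using Bc B1 by (simp add: mult_le_cancel_right1)
  have cq: "c \<le> q0"
  proof (rule ccontr)
    assume "\<not> c \<le> q0"
    then have "B ^ q0 \<le> B ^ c" using B1 by (intro power_increasing) auto
    then show False using ob0 ob_le[of b0 q0] \<open>H' \<ge> B ^ c\<close> by linarith
  qed
  obtain s where s: "s \<le> c" "b0 - int s \<notin> Bs" using avoid_finite[OF fin] c_def by blast
  have "ob b0 q0 = ob ((b0 - int s) + int s) ((q0 - s) + s)" using s cq by simp
  also have "\<dots> = VV (b0 - int s + 1) s * ob (b0 - int s) (q0 - s)" by (rule ob_R2)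
  also have "\<dots> \<le> B ^ s * ob (b0 - int s) (q0 - s)"
    using ob_pos by (intro mult_right_mono V_le) (auto intro: less_imp_le)
  also have "\<dots> \<le> B ^ c * ob (b0 - int s) (q0 - s)"
    using s B1 ob_pos by (intro mult_right_mono power_increasing) (auto intro: less_imp_le)
  finally have "H' < B ^ c * ob (b0 - int s) (q0 - s)" using ob0 by simp
  then have "max H 1 < ob (b0 - int s) (q0 - s)" unfolding H'_def using Bc by (simp add: mult.commute)
  then show ?thesis using s by (intro exI[of _ "b0 - int s"] exI[of _ "q0 - s"]) auto
qed

end


context wsh begin

lemma step:
  assumes freq: "\<And>e P0. e > 0 \<Longrightarrow> \<exists>n\<ge>P0. ob 0 n < e"
    and unb: "\<And>H. \<exists>k n. VV k (Suc n) > H" and d1: "\<delta>1 > 0" and fin: "finite Bs"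
  shows "\<exists>p q b \<theta>. q0 < p \<and> p < q \<and> b \<notin> Bs \<and> (\<forall>c\<in>Bs. ob c p \<le> 1/(real k+1)^2) \<and>
     (\<forall>m. \<bar>m\<bar> \<le> int k \<longrightarrow> ob m p \<le> 1/(real k+1)) \<and> 0 < \<theta> \<and> \<theta> \<le> \<delta>1 * (1/2)^(k+1) / B^p \<and>
     (real k+1)^(k+1) \<le> ob b q * \<theta>"
proof -
  have e: "1/(real k+1)^2 > 0" by simp
  obtain p where p: "p \<ge> Suc q0" "\<forall>c\<in>Bs \<union> {- int k..int k}. ob c p \<le> 1/(real k+1)^2"
    using common_small[OF freq _ e, of "Bs \<union> {- int k..int k}" "Suc q0"] fin by auto
  have "real k + 1 \<le> (real k+1) * (real k+1)" by (intro mult_le_cancel_left1[THEN iffD2]) auto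
  then have le2: "1/(real k+1)^2 \<le> 1/(real k+1)"
    by (intro divide_left_mono) (auto simp: power2_eq_square)
  define \<theta> where "\<theta> = \<delta>1 * (1/2)^(k+1) / B^p"
  have \<theta>: "\<theta> > 0" using d1 B1 by (simp add: \<theta>_def)
  obtain b q where bq: "b \<notin> Bs" "ob b q \<ge> max ((real k+1)^(k+1) / \<theta>) (B^p + 1)"
    using big_avoid[OF unb fin] by blast
  have "p < q"
  proof (rule ccontr)
    assume "\<not> p < q"
    then have "B ^ q \<le> B ^ p" using B1 by (intro power_increasing) auto
    then show False using bq(2) ob_le[of b q] by linarith
  qed
  moreover have "(real k+1)^(k+1) \<le> ob b q * \<theta>"
  proof -
    have "(real k+1)^(k+1) / \<theta> \<le> ob b q" using bq(2) by simp
    then show ?thesis using \<theta> by (simp add: divide_le_eq)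
  qed
  moreover have "\<forall>m. \<bar>m\<bar> \<le> int k \<longrightarrow> ob m p \<le> 1/(real k+1)"
  proof (intro allI impI)
    fix m assume "\<bar>m\<bar> \<le> int k"
    then have "m \<in> Bs \<union> {- int k..int k}" by auto
    then show "ob m p \<le> 1/(real k+1)" using p(2) le2 by (meson order.trans)
  qed
  ultimately show ?thesis using p bq \<theta> by (intro exI[of _ p] exI[of _ q] exI[of _ b] exI[of _ \<theta>]) (auto simp: \<theta>_def)
qed

lemma construct:
  assumes freq: "\<And>e P0. e > 0 \<Longrightarrow> \<exists>n\<ge>P0. ob 0 n < e"
    and unb: "\<And>H. \<exists>k n. VV k (Suc n) > H" and d1: "\<delta>1 > 0"
  shows "\<exists>(p::nat\<Rightarrow>nat) (q::nat\<Rightarrow>nat) (b::nat\<Rightarrow>int) (\<theta>::nat\<Rightarrow>real).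
     (\<forall>k. p k < q k \<and> q k < p (Suc k)) \<and> inj b \<and>
     (\<forall>j l. j < l \<longrightarrow> ob (b j) (p l) \<le> 1/(real l+1)^2) \<and>
     (\<forall>m l. \<bar>m\<bar> \<le> int l \<longrightarrow> ob m (p l) \<le> 1/(real l+1)) \<and>
     (\<forall>k. 0 < \<theta> k \<and> \<theta> k \<le> \<delta>1 * (1/2)^(k+1) / B^(p k)) \<and>
     (\<forall>k. (real k+1)^(k+1) \<le> ob (b k) (q k) * \<theta> k)"
proof -
  define P where "P = (\<lambda>k (s::nat\<times>nat\<times>int\<times>real\<times>int set). case s of (p,q,b,\<theta>,Bs) \<Rightarrow>
      finite Bs \<and> b \<in> Bs \<and> p < q \<and> (\<forall>m. \<bar>m\<bar> \<le> int k \<longrightarrow> ob m p \<le> 1/(real k+1)) \<and>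
      0 < \<theta> \<and> \<theta> \<le> \<delta>1 * (1/2)^(k+1) / B^p \<and> (real k+1)^(k+1) \<le> ob b q * \<theta>)"
  define Q where "Q = (\<lambda>k (s::nat\<times>nat\<times>int\<times>real\<times>int set) (s'::nat\<times>nat\<times>int\<times>real\<times>int set).
      case s of (p,q,b,\<theta>,Bs) \<Rightarrow> case s' of (p',q',b',\<theta>',Bs') \<Rightarrow>
      q < p' \<and> b' \<notin> Bs \<and> Bs' = insert b' Bs \<and> (\<forall>c\<in>Bs. ob c p' \<le> 1/(real (Suc k)+1)^2))"
  have "\<exists>f. \<forall>n. P n (f n) \<and> Q n (f n) (f (Suc n))"
  proof (rule dependent_nat_choice)
    obtain p q b \<theta> where H: "0 < p \<and> p < q \<and> b \<notin> {} \<and> (\<forall>c\<in>{}. ob c p \<le> 1/(real 0+1)^2) \<and>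
     (\<forall>m. \<bar>m\<bar> \<le> int 0 \<longrightarrow> ob m p \<le> 1/(real 0+1)) \<and> 0 < \<theta> \<and> \<theta> \<le> \<delta>1 * (1/2)^(0+1) / B^p \<and>
     (real 0+1)^(0+1) \<le> ob b q * \<theta>"
      using step[OF freq unb d1, of "{}" 0 0] by blast
    show "\<exists>x. P 0 x" using H by (intro exI[of _ "(p,q,b,\<theta>,{b})"]) (simp add: P_def)
  next
    fix x n assume Px: "P n x"
    obtain p q b \<theta> Bs where x: "x = (p,q,b,\<theta>,Bs)" by (cases x) auto
    have fin: "finite Bs" using Px x by (simp add: P_def)
    obtain p' q' b' \<theta>' where H: "q < p' \<and> p' < q' \<and> b' \<notin> Bs \<and> (\<forall>c\<in>Bs. ob c p' \<le> 1/(real (Suc n)+1)^2) \<and>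
     (\<forall>m. \<bar>m\<bar> \<le> int (Suc n) \<longrightarrow> ob m p' \<le> 1/(real (Suc n)+1)) \<and> 0 < \<theta>' \<and> \<theta>' \<le> \<delta>1 * (1/2)^(Suc n+1) / B^p' \<and>
     (real (Suc n)+1)^(Suc n+1) \<le> ob b' q' * \<theta>'"
      using step[OF freq unb d1 fin, of q "Suc n"] by blast
    show "\<exists>y. P (Suc n) y \<and> Q n x y"
      using H fin by (intro exI[of _ "(p',q',b',\<theta>',insert b' Bs)"]) (simp add: P_def Q_def x)
  qed
  then obtain f where f: "\<And>n. P n (f n)" "\<And>n. Q n (f n) (f (Suc n))" by blast
  define p where "p k = fst (f k)" for k
  define q where "q k = fst (snd (f k))" for k
  define b where "b k = fst (snd (snd (f k)))" for k
  define \<theta> where "\<theta> k = fst (snd (snd (snd (f k))))" for k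
  define Bs where "Bs k = snd (snd (snd (snd (f k))))" for k
  have fk: "f k = (p k, q k, b k, \<theta> k, Bs k)" for k by (simp add: p_def q_def b_def \<theta>_def Bs_def)
  have Pk: "finite (Bs k) \<and> b k \<in> Bs k \<and> p k < q k \<and> (\<forall>m. \<bar>m\<bar> \<le> int k \<longrightarrow> ob m (p k) \<le> 1/(real k+1)) \<and>
      0 < \<theta> k \<and> \<theta> k \<le> \<delta>1 * (1/2)^(k+1) / B^(p k) \<and> (real k+1)^(k+1) \<le> ob (b k) (q k) * \<theta> k" for k
    using f(1)[of k] unfolding fk P_def by simp
  have Qk: "q k < p (Suc k) \<and> b (Suc k) \<notin> Bs k \<and> Bs (Suc k) = insert (b (Suc k)) (Bs k) \<and>
      (\<forall>c\<in>Bs k. ob c (p (Suc k)) \<le> 1/(real (Suc k)+1)^2)" for k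
    using f(2)[of k] unfolding fk Q_def by simp
  have inBs: "j \<le> k \<Longrightarrow> b j \<in> Bs k" for j k
  proof (induction k)
    case 0 then show ?case using Pk by simp
  next
    case (Suc k)
    then show ?case using Pk Qk by (cases "j = Suc k") auto
  qed
  have neq: "j < l \<Longrightarrow> b j \<noteq> b l" for j l
  proof -
    assume jl: "j < l"
    then obtain l' where l: "l = Suc l'" using less_imp_Suc_add by blast
    then have "b j \<in> Bs l'" using jl inBs by simp
    moreover have "b l \<notin> Bs l'" using Qk l by simp
    ultimately show ?thesis by auto
  qed
  have "inj b"
  proof (rule injI)
    fix x y assume "b x = b y"
    then show "x = y" using neq[of x y] neq[of y x] by (cases "x < y"; cases "y < x") auto
  qed
  moreover have "\<forall>j l. j < l \<longrightarrow> ob (b j) (p l) \<le> 1/(real l+1)^2"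
  proof (intro allI impI)
    fix j l :: nat assume jl: "j < l"
    then obtain l' where l: "l = Suc l'" using less_imp_Suc_add by blast
    then have "b j \<in> Bs l'" using jl inBs by simp
    then show "ob (b j) (p l) \<le> 1/(real l+1)^2" using Qk[of l'] l by simp
  qed
  ultimately show ?thesis using Pk Qk
    by (intro exI[of _ p] exI[of _ q] exI[of _ b] exI[of _ \<theta>]) auto
qed

end


lemma tendsto0_by_eventually:
  fixes f :: "nat \<Rightarrow> real"
  assumes "\<And>l. 0 \<le> f l" "\<And>e. e > 0 \<Longrightarrow> eventually (\<lambda>l. f l \<le> e) sequentially"
  shows "f \<longlonglongrightarrow> 0"
proof (rule tendstoI)
  fix e :: real assume e: "e > 0"
  have "eventually (\<lambda>l. f l \<le> e/2) sequentially" by (rule assms(2)) (use e in simp)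
  then show "eventually (\<lambda>l. dist (f l) 0 < e) sequentially"
    by eventually_elim (use assms(1) e in auto)
qed

lemma half_pow_sums: "(\<lambda>k. (1/2::real)^(k+1)) sums 1"
proof -
  have "(\<lambda>k. (1/2::real)^k) sums (1 / (1 - 1/2))" by (rule geometric_sums) simp
  then have "(\<lambda>k. (1/2) * (1/2::real)^k) sums ((1/2) * (1 / (1 - 1/2)))" by (rule sums_mult)
  then show ?thesis by simp
qed

locale wsh2 = wsh X N w B K
  for X :: "(int \<Rightarrow> 'a::real_normed_field) set" and N w B K +
  fixes p q :: "nat \<Rightarrow> nat" and b :: "nat \<Rightarrow> int" and \<theta> :: "nat \<Rightarrow> real" and \<delta>1 :: real
  assumes pq: "\<And>k. p k < q k" "\<And>k. q k < p (Suc k)"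
  and binj: "inj b"
  and C3: "\<And>j l. j < l \<Longrightarrow> ob (b j) (p l) \<le> 1/(real l+1)^2"
  and C4: "\<And>m l. \<bar>m\<bar> \<le> int l \<Longrightarrow> ob m (p l) \<le> 1/(real l+1)"
  and th0: "\<And>k. 0 < \<theta> k" and th1: "\<And>k. \<theta> k \<le> \<delta>1 * (1/2)^(k+1) / B^(p k)"
  and C6: "\<And>k. (real k+1)^(k+1) \<le> ob (b k) (q k) * \<theta> k"
  and d1: "0 < \<delta>1" "\<delta>1 \<le> 1"
  and d1X: "\<And>v \<beta>. inj \<beta> \<Longrightarrow> (\<forall>j. j \<notin> range \<beta> \<longrightarrow> v j = 0) \<Longrightarrow> summable (\<lambda>k. norm (v (\<beta> k))) \<Longrightarrow>
      (\<Sum>k. norm (v (\<beta> k))) \<le> \<delta>1 \<Longrightarrow> v \<in> X \<and> N v \<le> 1"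
begin

lemma p_mono: "strict_mono p" unfolding strict_mono_Suc_iff using pq less_trans by blast
lemma q_mono: "strict_mono q" unfolding strict_mono_Suc_iff using pq less_trans by blast

definition mi :: "nat \<Rightarrow> int" where "mi i = fst (from_nat i :: int \<times> nat)"
definition ri :: "nat \<Rightarrow> nat" where "ri i = snd (from_nat i :: int \<times> nat)"
definition eps :: "nat \<Rightarrow> real" where "eps i = 1 / (real (ri i) + 1)"
definition zeta :: "nat \<Rightarrow> nat \<Rightarrow> real" where "zeta i k = \<theta> k * (1 / (real k + 1)) ^ i"
definition zr :: "nat \<Rightarrow> int \<Rightarrow> real" where "zr i j = (if j \<in> range b then zeta i (inv b j) else 0)"
definition zh :: "nat \<Rightarrow> int \<Rightarrow> 'a" where "zh i j = of_real (zr i j)"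
definition g :: "nat \<Rightarrow> int \<Rightarrow> 'a" where "g i j = unit (mi i) j + of_real (eps i) * zh i j"
definition M :: "(int \<Rightarrow> 'a) set" where "M = {x. \<exists>c n. x = (\<lambda>j. \<Sum>i<n. c i * g i j)}"

lemma eps_pos: "0 < eps i" and eps_le1: "eps i \<le> 1"
  by (auto simp: eps_def)

lemma zeta_pos: "0 < zeta i k" using th0 by (simp add: zeta_def)

lemma theta_le: "\<theta> k \<le> \<delta>1 * (1/2)^(k+1)"
proof -
  have "\<theta> k \<le> \<delta>1 * (1/2)^(k+1) / B^(p k)" by (rule th1)
  also have "\<dots> \<le> \<delta>1 * (1/2)^(k+1)"
    using divide_left_mono[of 1 "B^(p k)" "\<delta>1 * (1/2)^(k+1)"] B1 d1 by (simp add: one_le_power)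
  finally show ?thesis .
qed

lemma zeta_le: "zeta i k \<le> \<theta> k"
proof -
  have "(1 / (real k + 1)) ^ i \<le> 1" by (intro power_le_one) auto
  then show ?thesis using th0[of k] by (simp add: zeta_def mult_left_le)
qed

lemma zr_b: "zr i (b k) = zeta i k" using binj by (simp add: zr_def)
lemma zr_nonneg: "zr i j \<ge> 0" using zeta_pos by (auto simp: zr_def less_imp_le)

lemma zeta_summable: "summable (\<lambda>k. zeta i k)" and zeta_sum: "(\<Sum>k. zeta i k) \<le> \<delta>1"
proof -
  have s: "(\<lambda>k. \<delta>1 * (1/2::real)^(k+1)) sums (\<delta>1 * 1)" using half_pow_sums by (rule sums_mult)
  have le: "zeta i k \<le> \<delta>1 * (1/2)^(k+1)" for k using zeta_le theta_le order.trans by blast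
  have sg: "summable (\<lambda>k. \<delta>1 * (1/2::real)^(k+1))" using s by (rule sums_summable)
  show sm: "summable (\<lambda>k. zeta i k)"
  proof (rule summable_comparison_test'[OF sg, of 0])
    fix n :: nat show "norm (zeta i n) \<le> \<delta>1 * (1/2)^(n+1)" using le[of n] zeta_pos[of i n] by simp
  qed
  have "(\<Sum>k. zeta i k) \<le> (\<Sum>k. \<delta>1 * (1/2::real)^(k+1))"
    by (rule suminf_le[OF le sm sg])
  then show "(\<Sum>k. zeta i k) \<le> \<delta>1" using s by (simp add: sums_iff)
qed

lemma zh_mem: "zh i \<in> X \<and> N (zh i) \<le> 1"
proof (rule d1X[OF binj])
  show "\<forall>j. j \<notin> range b \<longrightarrow> zh i j = 0" by (simp add: zh_def zr_def)
  have eq: "(\<lambda>k. norm (zh i (b k))) = (\<lambda>k. zeta i k)"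
    using zeta_pos by (auto simp: zh_def zr_b less_imp_le)
  show "summable (\<lambda>k. norm (zh i (b k)))" unfolding eq by (rule zeta_summable)
  show "(\<Sum>k. norm (zh i (b k))) \<le> \<delta>1" unfolding eq by (rule zeta_sum)
qed

lemma g_mem: "g i \<in> X"
proof -
  have "(\<lambda>j. of_real (eps i) * zh i j) \<in> X" by (rule conjunct1[OF scal_mem[OF conjunct1[OF zh_mem]]])
  then have "(\<lambda>j. unit (mi i) j + of_real (eps i) * zh i j) \<in> X" by (rule conjunct1[OF Nadd[OF unit_mem]])
  moreover have "g i = (\<lambda>j. unit (mi i) j + of_real (eps i) * zh i j)" by (rule ext) (simp add: g_def)
  ultimately show ?thesis by simp
qed

lemma M_sub: "M \<subseteq> X"
proof
  fix x assume "x \<in> M"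
  then obtain c n where x: "x = (\<lambda>j. \<Sum>i<n. c i * g i j)" by (auto simp: M_def)
  have "(\<lambda>j. \<Sum>i\<in>{..<n}. (\<lambda>i j. c i * g i j) i j) \<in> X"
    by (rule conjunct1[OF sum_mem]) (auto intro: conjunct1[OF scal_mem[OF g_mem]])
  then show "x \<in> X" using x by simp
qed

lemma M_zero: "(\<lambda>j. 0) \<in> M"
  unfolding M_def by (intro CollectI exI[of _ "\<lambda>i. 0"] exI[of _ "0::nat"]) simp

lemma M_add: assumes "x \<in> M" "y \<in> M" shows "(\<lambda>j. x j + y j) \<in> M"
proof -
  obtain c n where x: "x = (\<lambda>j. \<Sum>i<n. c i * g i j)" using assms by (auto simp: M_def)
  obtain d m where y: "y = (\<lambda>j. \<Sum>i<m. d i * g i j)" using assms by (auto simp: M_def)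
  define c' where "c' i = (if i < n then c i else 0) + (if i < m then d i else 0)" for i
  have "(\<Sum>i<max n m. c' i * g i j) = (\<Sum>i<n. c i * g i j) + (\<Sum>i<m. d i * g i j)" for j
  proof -
    have "(\<Sum>i<max n m. c' i * g i j) = (\<Sum>i<max n m. (if i < n then c i * g i j else 0) + (if i < m then d i * g i j else 0))"
      by (rule sum.cong) (auto simp: c'_def distrib_right)
    also have "\<dots> = (\<Sum>i<max n m. (if i < n then c i * g i j else 0)) + (\<Sum>i<max n m. (if i < m then d i * g i j else 0))"
      by (rule sum.distrib)
    also have "(\<Sum>i<max n m. (if i < n then c i * g i j else 0)) = (\<Sum>i<n. c i * g i j)"
      by (rule sum.mono_neutral_cong_right) auto
    also have "(\<Sum>i<max n m. (if i < m then d i * g i j else 0)) = (\<Sum>i<m. d i * g i j)"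
      by (rule sum.mono_neutral_cong_right) auto
    finally show ?thesis .
  qed
  then show ?thesis unfolding M_def x y by (intro CollectI exI[of _ c'] exI[of _ "max n m"]) auto
qed

lemma M_scal: assumes "x \<in> M" shows "(\<lambda>j. a * x j) \<in> M"
proof -
  obtain c n where x: "x = (\<lambda>j. \<Sum>i<n. c i * g i j)" using assms by (auto simp: M_def)
  show ?thesis unfolding M_def x
    by (intro CollectI exI[of _ "\<lambda>i. a * c i"] exI[of _ n]) (simp add: sum_distrib_left mult.assoc)
qed

lemma M_diff: assumes "x \<in> M" "y \<in> M" shows "(\<lambda>j. x j - y j) \<in> M"
proof -
  have "(\<lambda>j. x j + (\<lambda>j. (-1) * y j) j) \<in> M" by (rule M_add[OF assms(1) M_scal[OF assms(2)]])
  moreover have "(\<lambda>j. x j + (\<lambda>j. (-1) * y j) j) = (\<lambda>j. x j - y j)" by (rule ext) simp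
  ultimately show ?thesis by simp
qed

lemma g_in_M: "g i \<in> M"
proof -
  have "(\<Sum>k<Suc i. (if k = i then 1 else 0) * g k j) = g i j" for j
  proof -
    have "(\<Sum>k<Suc i. (if k = i then 1 else 0) * g k j) = (\<Sum>k<Suc i. if k = i then g k j else 0)"
      by (rule sum.cong) auto
    also have "\<dots> = g i j" by (subst sum.delta) auto
    finally show ?thesis .
  qed
  then have "g i = (\<lambda>j. \<Sum>k<Suc i. (if k = i then 1 else 0) * g k j)" by (intro ext) simp
  then show ?thesis unfolding M_def
    by (intro CollectI exI[of _ "\<lambda>k. if k = i then 1 else 0"] exI[of _ "Suc i"])
qed

lemma M_sum: "finite F \<Longrightarrow> (\<And>m. m \<in> F \<Longrightarrow> f m \<in> M) \<Longrightarrow> (\<lambda>j. \<Sum>m\<in>F. f m j) \<in> M"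
proof (induction F rule: finite_induct)
  case empty then show ?case using M_zero by simp
next
  case (insert a F) then show ?case using M_add[of "f a" "\<lambda>j. \<Sum>m\<in>F. f m j"] by simp
qed

lemma g0_nz: "g 0 (mi 0) \<noteq> 0"
proof -
  have "g 0 (mi 0) = of_real (1 + eps 0 * zr 0 (mi 0))" by (simp add: g_def unit_def zh_def)
  moreover have "0 \<le> eps 0 * zr 0 (mi 0)" using eps_pos[of 0] zr_nonneg[of 0 "mi 0"] by simp
  then have "1 + eps 0 * zr 0 (mi 0) > 0" by linarith
  ultimately show ?thesis by (metis of_real_eq_0_iff order_less_irrefl)
qed

lemma M_uncountable: "uncountable M"
proof
  assume c: "countable M"
  have "(\<lambda>r::real. \<lambda>j. of_real r * g 0 j) ` UNIV \<subseteq> M"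
  proof (rule image_subsetI)
    fix r :: real show "(\<lambda>j. of_real r * g 0 j) \<in> M" by (rule M_scal[OF g_in_M])
  qed
  then have cc: "countable ((\<lambda>r::real. \<lambda>j. of_real r * g 0 j) ` UNIV)" by (rule countable_subset[OF _ c])
  have inj: "inj (\<lambda>r::real. \<lambda>j. of_real r * g 0 j)"
  proof (rule injI)
    fix r s :: real assume "(\<lambda>j. of_real r * g 0 j) = (\<lambda>j. of_real s * g 0 j)"
    then have "of_real r * g 0 (mi 0) = (of_real s * g 0 (mi 0) :: 'a)" by (rule fun_cong)
    then show "r = s" using g0_nz by simp
  qed
  have "countable (UNIV :: real set)" by (rule countable_image_inj_on[OF cc inj])
  then show False using uncountable_UNIV_real by simp
qed

lemma g0_ne: "g 0 \<noteq> (\<lambda>j. 0)"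
proof
  assume "g 0 = (\<lambda>j. 0)"
  then have "g 0 (mi 0) = 0" by simp
  then show False using g0_nz by simp
qed

lemma M_two: "\<exists>x\<in>M. \<exists>y\<in>M. x \<noteq> y"
  using g_in_M[of 0] M_zero g0_ne by blast

end


context wsh2 begin

lemma Tz_zero: "j \<notin> range (\<lambda>k. b k - int n) \<Longrightarrow> (T ^^ n) (zh i) j = 0"
proof -
  assume j: "j \<notin> range (\<lambda>k. b k - int n)"
  have "j + int n \<notin> range b"
  proof
    assume "j + int n \<in> range b"
    then obtain k where "b k = j + int n" by auto
    then have "j = b k - int n" by simp
    then show False using j by auto
  qed
  then show ?thesis by (simp add: Tpow zh_def zr_def)
qed

lemma Tz_val: "norm ((T ^^ n) (zh i) (b k - int n)) = ob (b k) n * zeta i k"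
  using zeta_pos[of i k] by (simp add: norm_Tpow ob_def zh_def zr_b)

lemma h_sum_bound:
  shows "summable (\<lambda>k. ob (b k) (p l) * zeta i k)"
    and "(\<Sum>k. ob (b k) (p l) * zeta i k) \<le> 1/(real l+1) + (1/2)^l"
proof -
  define h where "h = (\<lambda>k. ob (b k) (p l) * zeta i k)"
  have h0: "h k \<ge> 0" for k using ob_pos zeta_pos by (simp add: h_def less_imp_le)
  have hB: "h k \<le> B^(p l) * (1/2)^(k+1)" for k
  proof -
    have "h k \<le> B^(p l) * zeta i k" unfolding h_def using zeta_pos[of i k] ob_le
      by (intro mult_right_mono) (auto intro: less_imp_le)
    also have "\<dots> \<le> B^(p l) * (1/2)^(k+1)"
    proof (intro mult_left_mono)
      have "zeta i k \<le> \<delta>1 * (1/2)^(k+1)" using zeta_le theta_le order.trans by blast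
      also have "\<dots> \<le> (1/2)^(k+1)" using d1 by (intro mult_left_le_one_le) auto
      finally show "zeta i k \<le> (1/2)^(k+1)" .
    qed (use B1 in auto)
    finally show ?thesis .
  qed
  have sB: "(\<lambda>k. B^(p l) * (1/2::real)^(k+1)) sums (B^(p l) * 1)" using half_pow_sums by (rule sums_mult)
  have "summable h"
  proof (rule summable_comparison_test'[OF sums_summable[OF sB], of 0])
    fix n :: nat show "norm (h n) \<le> B^(p l) * (1/2)^(n+1)" using hB[of n] h0[of n] by simp
  qed
  then show sh: "summable (\<lambda>k. ob (b k) (p l) * zeta i k)" by (simp add: h_def)
  have split: "(\<Sum>k. h k) = (\<Sum>k. h (k + l)) + (\<Sum>k<l. h k)"
    using sh by (intro suminf_split_initial_segment) (simp add: h_def)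
  have first: "(\<Sum>k<l. h k) \<le> 1/(real l+1)"
  proof -
    have "(\<Sum>k<l. h k) \<le> (\<Sum>k<l. 1/(real l+1)^2)"
    proof (rule sum_mono)
      fix k assume k: "k \<in> {..<l}"
      have "zeta i k \<le> 1"
      proof -
        have "zeta i k \<le> \<delta>1 * (1/2)^(k+1)" using zeta_le theta_le order.trans by blast
        also have "\<dots> \<le> 1" using d1 by (intro mult_le_one power_le_one) auto
        finally show ?thesis .
      qed
      then have "h k \<le> ob (b k) (p l)" unfolding h_def using ob_pos[of "b k" "p l"] by (simp add: mult_le_cancel_left1)
      also have "\<dots> \<le> 1/(real l+1)^2" using C3 k by simp
      finally show "h k \<le> 1/(real l+1)^2" .
    qed
    also have "\<dots> = real l / (real l+1)^2" by simp
    also have "\<dots> \<le> (real l + 1)/(real l+1)^2" by (intro divide_right_mono) auto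
    also have "\<dots> = 1/(real l+1)" by (simp add: power2_eq_square)
    finally show ?thesis .
  qed
  have tail_le: "h (k + l) \<le> (1/2)^l * (1/2)^(k+1)" for k
  proof -
    have "h (k + l) \<le> B^(p l) * \<theta> (k + l)" unfolding h_def
      using zeta_pos[of i "k+l"] ob_le zeta_le th0 B1
      by (intro mult_mono) (auto intro: less_imp_le)
    also have "\<dots> \<le> B^(p l) * (\<delta>1 * (1/2)^(k+l+1) / B^(p (k+l)))"
      using th1 B1 by (intro mult_left_mono) auto
    also have "\<dots> = (B^(p l) / B^(p (k+l))) * (\<delta>1 * (1/2)^(k+l+1))" by simp
    also have "\<dots> \<le> 1 * (1 * (1/2)^(k+l+1))"
    proof (rule mult_mono)
      have "p l \<le> p (k + l)" using p_mono by (simp add: strict_mono_less_eq)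
      then have "B^(p l) \<le> B^(p (k+l))" using B1 by (intro power_increasing) auto
      then show "B^(p l) / B^(p (k+l)) \<le> 1" using B1 by simp
      show "\<delta>1 * (1/2)^(k+l+1) \<le> 1 * (1/2)^(k+l+1)" using d1 by (intro mult_right_mono) auto
    qed (use d1 B1 in auto)
    also have "\<dots> = (1/2)^l * (1/2)^(k+1)" by (simp add: power_add)
    finally show ?thesis .
  qed
  have sT: "(\<lambda>k. (1/2::real)^l * (1/2)^(k+1)) sums ((1/2)^l * 1)" using half_pow_sums by (rule sums_mult)
  have shl: "summable (\<lambda>k. h (k + l))" using \<open>summable h\<close> by (rule summable_ignore_initial_segment)
  have "(\<Sum>k. h (k + l)) \<le> (\<Sum>k. (1/2::real)^l * (1/2)^(k+1))"
    by (rule suminf_le[OF tail_le shl sums_summable[OF sT]])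
  also have "\<dots> = (1/2)^l" using sT by (simp add: sums_iff)
  finally show "(\<Sum>k. ob (b k) (p l) * zeta i k) \<le> 1/(real l+1) + (1/2)^l"
    using split first by (simp add: h_def)
qed

lemma inv_half_to0: "(\<lambda>l. 1/(real l+1) + (1/2::real)^l) \<longlonglongrightarrow> 0"
proof -
  have "(\<lambda>l. inverse (real (Suc l))) \<longlonglongrightarrow> 0" by (rule LIMSEQ_inverse_real_of_nat)
  then have a: "(\<lambda>l. 1/(real l+1)) \<longlonglongrightarrow> 0" by (simp add: inverse_eq_divide add.commute)
  have "(\<lambda>l. (1/2::real)^l) \<longlonglongrightarrow> 0" by (rule LIMSEQ_power_zero) simp
  then show ?thesis using tendsto_add[OF a] by simp
qed

lemma eventually_small: assumes e: "e > 0" shows "eventually (\<lambda>l. 1/(real l+1) + (1/2::real)^l \<le> e) sequentially"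
proof -
  have "eventually (\<lambda>l. 1/(real l+1) + (1/2::real)^l < e) sequentially"
    using order_tendstoD(2)[OF inv_half_to0 e] .
  then show ?thesis by (rule eventually_mono) simp
qed

lemma Tz_mem: "(T ^^ n) (zh i) \<in> X"
  using Tpow_mem zh_mem by blast

lemma Tz_to0: "(\<lambda>l. N ((T ^^ p l) (zh i))) \<longlonglongrightarrow> 0"
proof (rule tendsto0_by_eventually)
  show "0 \<le> N ((T ^^ p l) (zh i))" for l using N_nonneg Tz_mem by blast
  fix e :: real assume e: "e > 0"
  obtain d where d: "d > 0" and H: "\<forall>v (\<beta>::nat\<Rightarrow>int). inj \<beta> \<longrightarrow> (\<forall>j. j \<notin> range \<beta> \<longrightarrow> v j = 0) \<longrightarrow>
     summable (\<lambda>k. norm (v (\<beta> k))) \<longrightarrow> (\<Sum>k. norm (v (\<beta> k))) \<le> d \<longrightarrow> v \<in> X \<and> N v \<le> e"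
    using Nsparse[OF e] by blast
  show "eventually (\<lambda>l. N ((T ^^ p l) (zh i)) \<le> e) sequentially"
    using eventually_small[OF d]
  proof eventually_elim
    case (elim l)
    let ?\<beta> = "\<lambda>k. b k - int (p l)"
    have inj: "inj ?\<beta>" using binj by (auto simp: inj_def)
    have eq: "(\<lambda>k. norm ((T ^^ p l) (zh i) (?\<beta> k))) = (\<lambda>k. ob (b k) (p l) * zeta i k)"
      by (rule ext) (rule Tz_val)
    show ?case
      using H[rule_format, OF inj, of "(T ^^ p l) (zh i)"] Tz_zero h_sum_bound[of l i] elim
      unfolding eq by auto
  qed
qed

lemma Tunit: "(T ^^ n) (unit m) \<in> X \<and> N ((T ^^ n) (unit m)) \<le> ob m n * N (unit m)"
proof (rule Ndom[OF unit_mem])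
  show "0 \<le> ob m n" using ob_pos less_imp_le by blast
  fix j
  show "norm ((T ^^ n) (unit m) j) \<le> ob m n * norm (unit m (j + int n))"
  proof (cases "j + int n = m")
    case True
    then have "j = m - int n" by simp
    then show ?thesis by (simp add: norm_Tpow ob_def)
  qed (simp add: norm_Tpow unit_def)
qed

lemma Tg_eq: "(T ^^ n) (g i) = (\<lambda>j. (T ^^ n) (unit (mi i)) j + of_real (eps i) * (T ^^ n) (zh i) j)"
  by (rule ext) (simp add: Tpow g_def algebra_simps)

lemma Tg_mem: "(T ^^ n) (g i) \<in> X" using Tpow_mem g_mem by blast

lemma ob_to0: "eventually (\<lambda>l. ob m (p l) \<le> e) sequentially" if e: "e > 0"
proof -
  have "eventually (\<lambda>l. 1/(real l+1) + (1/2::real)^l \<le> e) sequentially" by (rule eventually_small[OF e])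
  moreover have "eventually (\<lambda>l. \<bar>m\<bar> \<le> int l) sequentially"
  proof (rule eventually_mono[OF eventually_ge_at_top[of "nat \<bar>m\<bar>"]])
    fix l :: nat assume "nat \<bar>m\<bar> \<le> l" then show "\<bar>m\<bar> \<le> int l" by (simp add: nat_le_iff)
  qed
  ultimately show ?thesis
  proof eventually_elim
    case (elim l)
    have "ob m (p l) \<le> 1/(real l+1)" using C4 elim by blast
    also have "\<dots> \<le> e" using elim zero_le_power[of "1/2::real" l] by linarith
    finally show ?case .
  qed
qed

lemma Tg_to0: "(\<lambda>l. N ((T ^^ p l) (g i))) \<longlonglongrightarrow> 0"
proof (rule tendsto0_by_eventually)
  show "0 \<le> N ((T ^^ p l) (g i))" for l using N_nonneg Tg_mem by blast
  fix e :: real assume e: "e > 0"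
  define Nu where "Nu = N (unit (mi i))"
  have Nu: "Nu \<ge> 0" unfolding Nu_def using N_nonneg unit_mem by blast
  define e1 where "e1 = e / (K * (Nu + 1))"
  have e1: "e1 > 0" using e K1 Nu by (simp add: e1_def)
  have "eventually (\<lambda>l. N ((T ^^ p l) (zh i)) < e1) sequentially"
    using order_tendstoD(2)[OF Tz_to0 e1] .
  moreover have "eventually (\<lambda>l. ob (mi i) (p l) \<le> e1) sequentially" by (rule ob_to0[OF e1])
  ultimately show "eventually (\<lambda>l. N ((T ^^ p l) (g i)) \<le> e) sequentially"
  proof eventually_elim
    case (elim l)
    let ?u = "(T ^^ p l) (unit (mi i))" and ?z = "(T ^^ p l) (zh i)"
    have u: "?u \<in> X" "N ?u \<le> ob (mi i) (p l) * Nu" using Tunit unfolding Nu_def by auto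
    have z: "?z \<in> X" by (rule Tz_mem)
    have cz: "(\<lambda>j. of_real (eps i) * ?z j) \<in> X" "N (\<lambda>j. of_real (eps i) * ?z j) \<le> eps i * N ?z"
      using scal_mem[OF z, of "of_real (eps i)"] eps_pos[of i] by auto
    have Nz0: "N ?z \<ge> 0" using N_nonneg z by blast
    have "N ((T ^^ p l) (g i)) \<le> K * (N ?u + N (\<lambda>j. of_real (eps i) * ?z j))"
      unfolding Tg_eq using Nadd[OF u(1) cz(1)] by auto
    also have "\<dots> \<le> K * (e1 * Nu + 1 * e1)"
    proof (intro mult_left_mono add_mono)
      show "N ?u \<le> e1 * Nu" using u(2) elim Nu by (meson mult_right_mono order.trans)
      have "eps i \<le> 1" using eps_le1 by simp
      then have "N (\<lambda>j. of_real (eps i) * ?z j) \<le> 1 * N ?z" using cz(2) Nz0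
        by (meson mult_right_mono order.trans)
      then show "N (\<lambda>j. of_real (eps i) * ?z j) \<le> 1 * e1" using elim by simp
    qed (use K1 in auto)
    also have "\<dots> = K * (Nu + 1) * e1" by (simp add: algebra_simps)
    also have "\<dots> = e" using K1 Nu by (simp add: e1_def)
    finally show ?case .
  qed
qed

lemma Tx_eq: "(T ^^ k) (\<lambda>j. \<Sum>i<n. c i * g i j) = (\<lambda>j. \<Sum>i<n. c i * (T ^^ k) (g i) j)"
  by (rule ext) (simp add: Tpow sum_distrib_left mult_ac)

lemma Tx_to0: assumes "x \<in> M" shows "(\<lambda>l. N ((T ^^ p l) x)) \<longlonglongrightarrow> 0"
proof -
  obtain c n where x: "x = (\<lambda>j. \<Sum>i<n. c i * g i j)" using assms by (auto simp: M_def)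
  define U where "U = (\<lambda>l. K ^ n * (\<Sum>i<n. norm (c i) * N ((T ^^ p l) (g i))))"
  have U: "U \<longlonglongrightarrow> 0"
  proof -
    have "(\<lambda>l. \<Sum>i<n. norm (c i) * N ((T ^^ p l) (g i))) \<longlonglongrightarrow> (\<Sum>i<n. norm (c i) * 0)"
      by (intro tendsto_sum tendsto_mult tendsto_const Tg_to0)
    then have "(\<lambda>l. K ^ n * (\<Sum>i<n. norm (c i) * N ((T ^^ p l) (g i)))) \<longlonglongrightarrow> K ^ n * 0"
      by (intro tendsto_mult tendsto_const) simp
    then show ?thesis by (simp add: U_def)
  qed
  have le: "norm (N ((T ^^ p l) x)) \<le> U l" for l
  proof -
    let ?f = "\<lambda>i j. c i * (T ^^ p l) (g i) j"
    have mem: "?f i \<in> X" for i using scal_mem[OF Tg_mem] by blast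
    have "N (\<lambda>j. \<Sum>i\<in>{..<n}. ?f i j) \<le> K ^ card {..<n} * (\<Sum>i\<in>{..<n}. N (?f i))"
      using sum_mem[of "{..<n}" ?f] mem by blast
    also have "\<dots> = K ^ n * (\<Sum>i<n. N (?f i))" by simp
    also have "\<dots> \<le> K ^ n * (\<Sum>i<n. norm (c i) * N ((T ^^ p l) (g i)))"
    proof (rule mult_left_mono[OF sum_mono])
      fix i show "N (?f i) \<le> norm (c i) * N ((T ^^ p l) (g i))" by (rule conjunct2[OF scal_mem[OF Tg_mem]])
    next
      show "0 \<le> K ^ n" using K1 by simp
    qed
    finally have "N ((T ^^ p l) x) \<le> U l" unfolding x Tx_eq U_def by simp
    moreover have "N ((T ^^ p l) x) \<ge> 0" using N_nonneg Tpow_mem M_sub assms by blast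
    ultimately show ?thesis by simp
  qed
  show ?thesis by (rule Lim_null_comparison[OF _ U]) (use le in auto)
qed

end


lemma freq_small:
  fixes f :: "nat \<Rightarrow> real"
  assumes pos: "\<And>n. 0 < f n" and lim: "(\<lambda>k. f (r k)) \<longlonglongrightarrow> 0" and e: "e > 0"
  shows "\<exists>n\<ge>N0. f n < e"
proof -
  define \<mu> where "\<mu> = Min (insert e (f ` {..<N0}))"
  have \<mu>: "\<mu> > 0" unfolding \<mu>_def using pos e by (subst Min_gr_iff) auto
  have \<mu>le: "\<mu> \<le> e" "\<And>n. n < N0 \<Longrightarrow> \<mu> \<le> f n" unfolding \<mu>_def by auto
  have "eventually (\<lambda>k. f (r k) < \<mu>) sequentially" using order_tendstoD(2)[OF lim \<mu>] .
  then obtain k0 where "\<forall>k\<ge>k0. f (r k) < \<mu>" by (auto simp: eventually_sequentially)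
  then have k: "f (r k0) < \<mu>" by simp
  have "r k0 \<ge> N0"
  proof (rule ccontr)
    assume "\<not> r k0 \<ge> N0" then have "r k0 < N0" by simp
    then show False using \<mu>le(2)[of "r k0"] k by linarith
  qed
  then show ?thesis using k \<mu>le(1) by (intro exI[of _ "r k0"]) auto
qed

lemma freq_big:
  fixes f :: "nat \<Rightarrow> real"
  assumes lim: "filterlim (\<lambda>k. f (r k)) at_top sequentially"
  shows "\<exists>n\<ge>N0. Z < f n"
proof -
  define \<mu> where "\<mu> = Max (insert Z (f ` {..<N0}))"
  have \<mu>le: "Z \<le> \<mu>" "\<And>n. n < N0 \<Longrightarrow> f n \<le> \<mu>" unfolding \<mu>_def by auto
  have "eventually (\<lambda>k. \<mu> + 1 \<le> f (r k)) sequentially" using lim by (simp add: filterlim_at_top)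
  then obtain k0 where "\<forall>k\<ge>k0. \<mu> + 1 \<le> f (r k)" by (auto simp: eventually_sequentially)
  then have k: "\<mu> + 1 \<le> f (r k0)" by simp
  have "r k0 \<ge> N0"
  proof (rule ccontr)
    assume "\<not> r k0 \<ge> N0" then have "r k0 < N0" by simp
    then show False using \<mu>le(2)[of "r k0"] k by linarith
  qed
  then show ?thesis using k \<mu>le(1) by (intro exI[of _ "r k0"]) auto
qed

lemma liminf_zero_freq:
  fixes f :: "nat \<Rightarrow> real"
  assumes nn: "\<And>n. 0 \<le> f n" and fr: "\<And>N0 e. e > 0 \<Longrightarrow> \<exists>n\<ge>N0. f n < e"
  shows "liminf (\<lambda>n. ereal (f n)) = 0"
proof (rule antisym)
  show "0 \<le> liminf (\<lambda>n. ereal (f n))" using nn by (intro Liminf_bounded) auto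
  show "liminf (\<lambda>n. ereal (f n)) \<le> 0"
  proof (rule ccontr)
    assume "\<not> ?thesis"
    then have "0 < liminf (\<lambda>n. ereal (f n))" by simp
    then obtain z where z: "0 < ereal z" "ereal z < liminf (\<lambda>n. ereal (f n))" using ereal_dense2 by blast
    have "eventually (\<lambda>n. ereal z < ereal (f n)) sequentially" using z(2) by (rule less_LiminfD)
    then obtain N0 where N0: "\<And>n. n \<ge> N0 \<Longrightarrow> z < f n" by (auto simp: eventually_sequentially)
    obtain n where "n \<ge> N0" "f n < z" using fr[of z N0] z by auto
    then show False using N0 by force
  qed
qed

lemma limsup_inf_freq:
  fixes f :: "nat \<Rightarrow> real"
  assumes fr: "\<And>N0 Z. \<exists>n\<ge>N0. Z < f n"
  shows "limsup (\<lambda>n. ereal (f n)) = \<infinity>"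
proof (rule ccontr)
  assume ne: "limsup (\<lambda>n. ereal (f n)) \<noteq> \<infinity>"
  have "\<exists>z. limsup (\<lambda>n. ereal (f n)) < ereal z"
  proof (cases "limsup (\<lambda>n. ereal (f n))")
    case (real r) then show ?thesis by (intro exI[of _ "r + 1"]) auto
  qed (use ne in auto)
  then obtain z where "limsup (\<lambda>n. ereal (f n)) < ereal z" by blast
  then have "eventually (\<lambda>n. ereal (f n) < ereal z) sequentially" by (rule Limsup_lessD)
  then obtain N0 where N0: "\<And>n. n \<ge> N0 \<Longrightarrow> f n < z" by (auto simp: eventually_sequentially)
  obtain n where "n \<ge> N0" "z < f n" using fr by blast
  then show False using N0 by force
qed

context wsh begin

lemma Tpow_pos: assumes "x \<in> X" "x \<noteq> (\<lambda>j. 0)" shows "N ((T ^^ n) x) > 0"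
proof -
  obtain j where j: "x j \<noteq> 0" using assms(2) by auto
  have "N ((T ^^ n) x) \<ge> norm ((T ^^ n) x (j - int n))" using Tpow_mem[OF assms(1)] Nle by blast
  moreover have "norm ((T ^^ n) x (j - int n)) = VV (j - int n + 1) n * norm (x j)" by (simp add: norm_Tpow)
  moreover have "VV (j - int n + 1) n * norm (x j) > 0" using V_pos j by simp
  ultimately show ?thesis by linarith
qed

end

context wsh2 begin

lemma x_bk:
  assumes "b k \<notin> mi ` {..<n}"
  shows "(\<Sum>i<n. c i * g i (b k)) = (\<Sum>i<n. c i * of_real (eps i * zeta i k))"
proof (rule sum.cong[OF refl])
  fix i assume "i \<in> {..<n}"
  then have "b k \<noteq> mi i" using assms by auto
  then show "c i * g i (b k) = c i * of_real (eps i * zeta i k)"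
    by (simp add: g_def unit_def zh_def zr_b)
qed

lemma low_bound:
  fixes c :: "nat \<Rightarrow> 'a" and k :: nat
  assumes i0: "i0 < n" "\<And>i. i < i0 \<Longrightarrow> c i = 0"
  defines "\<gamma> \<equiv> 1 / (real k + 1)"
  shows "norm (\<Sum>i<n. c i * of_real (eps i * zeta i k)) \<ge>
    \<theta> k * \<gamma> ^ i0 * (norm (c i0) * eps i0 - (\<Sum>i<n. norm (c i)) * \<gamma>)"
proof -
  define r where "r i = eps i * zeta i k" for i
  have \<gamma>: "0 < \<gamma>" "\<gamma> \<le> 1" by (auto simp: \<gamma>_def)
  have r_eq: "r i = eps i * \<theta> k * \<gamma> ^ i" for i by (simp add: r_def zeta_def \<gamma>_def)
  have r0: "r i \<ge> 0" for i using eps_pos zeta_pos by (simp add: r_def less_imp_le)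
  have S: "(\<Sum>i<n. c i * of_real (r i)) = c i0 * of_real (r i0) + (\<Sum>i\<in>{..<n} - {i0}. c i * of_real (r i))"
    using i0 by (simp add: sum.remove)
  have rest: "norm (\<Sum>i\<in>{..<n} - {i0}. c i * of_real (r i)) \<le> (\<Sum>i<n. norm (c i)) * (\<theta> k * \<gamma> ^ Suc i0)"
  proof -
    have "norm (\<Sum>i\<in>{..<n} - {i0}. c i * of_real (r i)) \<le> (\<Sum>i\<in>{..<n} - {i0}. norm (c i * of_real (r i)))"
      by (rule norm_sum)
    also have "\<dots> \<le> (\<Sum>i\<in>{..<n} - {i0}. norm (c i) * (\<theta> k * \<gamma> ^ Suc i0))"
    proof (rule sum_mono)
      fix i assume i: "i \<in> {..<n} - {i0}"
      show "norm (c i * of_real (r i)) \<le> norm (c i) * (\<theta> k * \<gamma> ^ Suc i0)"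
      proof (cases "c i = 0")
        case False
        then have "\<not> i < i0" using i0(2) by blast
        then have ii: "Suc i0 \<le> i" using i by auto
        have "r i \<le> \<theta> k * \<gamma> ^ i"
          using eps_le1[of i] th0[of k] \<gamma> by (simp add: r_eq mult_left_le_one_le)
        also have "\<dots> \<le> \<theta> k * \<gamma> ^ Suc i0"
          using th0[of k] \<gamma> ii by (intro mult_left_mono power_decreasing) auto
        finally show ?thesis using r0[of i] by (simp add: norm_mult mult_left_mono)
      qed simp
    qed
    also have "\<dots> = (\<Sum>i\<in>{..<n} - {i0}. norm (c i)) * (\<theta> k * \<gamma> ^ Suc i0)" by (simp add: sum_distrib_right)
    also have "\<dots> \<le> (\<Sum>i<n. norm (c i)) * (\<theta> k * \<gamma> ^ Suc i0)"
      using th0[of k] \<gamma> by (intro mult_right_mono sum_mono2) auto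
    finally show ?thesis .
  qed
  have "norm (c i0 * of_real (r i0)) = norm (c i0) * r i0"
    using r0[of i0] by (simp add: norm_mult)
  then have first: "norm (c i0 * of_real (r i0)) = norm (c i0) * eps i0 * \<theta> k * \<gamma> ^ i0"
    by (simp add: r_eq mult.assoc)
  have "norm (c i0 * of_real (r i0)) - norm (\<Sum>i\<in>{..<n} - {i0}. c i * of_real (r i)) \<le>
        norm (\<Sum>i<n. c i * of_real (r i))"
    unfolding S by (rule norm_diff_ineq)
  then have "norm (c i0) * eps i0 * \<theta> k * \<gamma> ^ i0 - (\<Sum>i<n. norm (c i)) * (\<theta> k * \<gamma> ^ Suc i0) \<le>
        norm (\<Sum>i<n. c i * of_real (r i))" using rest first by linarith
  then show ?thesis by (simp add: r_def algebra_simps)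
qed

lemma pow_ge: "i0 \<le> k \<Longrightarrow> (real k + 1) ^ (k + 1) * (1 / (real k + 1)) ^ i0 \<ge> real k + 1"
proof -
  assume ik: "i0 \<le> k"
  have "(real k + 1) ^ (k + 1) = (real k + 1) ^ (k + 1 - i0) * (real k + 1) ^ i0"
    using ik by (simp add: power_add[symmetric])
  then have "(real k + 1) ^ (k + 1) * (1 / (real k + 1)) ^ i0 = (real k + 1) ^ (k + 1 - i0)"
    by (simp add: power_one_over field_simps)
  also have "\<dots> \<ge> (real k + 1) ^ 1" using ik by (intro power_increasing) auto
  finally show ?thesis by simp
qed

lemma Tx_blow:
  assumes xM: "x \<in> M" and nz: "x \<noteq> (\<lambda>j. 0)"
  shows "filterlim (\<lambda>k. N ((T ^^ q k) x)) at_top sequentially"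
proof -
  obtain c n where x: "x = (\<lambda>j. \<Sum>i<n. c i * g i j)" using xM by (auto simp: M_def)
  have ex: "\<exists>i. i < n \<and> c i \<noteq> 0"
  proof (rule ccontr)
    assume a: "\<not> ?thesis"
    have "x = (\<lambda>j. 0)" unfolding x
    proof (rule ext)
      fix j show "(\<Sum>i<n. c i * g i j) = 0" using a by (intro sum.neutral) auto
    qed
    then show False using nz by simp
  qed
  define i0 where "i0 = (LEAST i. i < n \<and> c i \<noteq> 0)"
  have i0': "i0 < n \<and> c i0 \<noteq> 0" unfolding i0_def by (rule LeastI_ex[OF ex])
  then have i0: "i0 < n" "c i0 \<noteq> 0" by auto
  have below: "c i = 0" if "i < i0" for i
  proof (rule ccontr)
    assume "c i \<noteq> 0"
    then have "i0 \<le> i" unfolding i0_def using that i0 by (intro Least_le) simp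
    then show False using that by simp
  qed
  define A where "A = norm (c i0) * eps i0"
  define C where "C = (\<Sum>i<n. norm (c i))"
  have A: "A > 0" using i0 eps_pos by (simp add: A_def)
  have C: "C \<ge> 0" by (simp add: C_def sum_nonneg)
  have "finite (b -` (mi ` {..<n}))" by (intro finite_vimageI binj) auto
  then obtain K0 where K0: "\<forall>k \<in> b -` (mi ` {..<n}). k < K0"
    unfolding finite_nat_set_iff_bounded by blast
  have main: "N ((T ^^ q k) x) \<ge> (real k + 1) * (A / 2)"
    if k: "k \<ge> K0" "k \<ge> i0" "real k + 1 \<ge> 2 * C / A" for k
  proof -
    define \<gamma> where "\<gamma> = 1 / (real k + 1)"
    have \<gamma>: "0 < \<gamma>" by (simp add: \<gamma>_def)
    have bk: "b k \<notin> mi ` {..<n}"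
    proof
      assume "b k \<in> mi ` {..<n}"
      then have "k < K0" using K0 by auto
      then show False using k(1) by simp
    qed
    have xb: "x (b k) = (\<Sum>i<n. c i * of_real (eps i * zeta i k))" unfolding x using x_bk[OF bk] by simp
    have lb: "\<theta> k * \<gamma> ^ i0 * (A - C * \<gamma>) \<le> norm (x (b k))"
      unfolding xb A_def C_def \<gamma>_def by (rule low_bound[OF i0(1) below])
    have "C \<le> A / 2 * (real k + 1)" using k(3) A by (simp add: divide_le_eq mult.commute)
    then have "C * \<gamma> \<le> A / 2" by (simp add: \<gamma>_def divide_le_eq)
    then have AC: "A / 2 \<le> A - C * \<gamma>" by simp
    have xT: "(T ^^ q k) x \<in> X" using Tpow_mem M_sub xM by blast
    have obp: "0 \<le> ob (b k) (q k)" using ob_pos less_imp_le by blast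
    have "(real k + 1) * (A / 2) \<le> (real k + 1) ^ (k + 1) * \<gamma> ^ i0 * (A / 2)"
      using pow_ge[OF k(2)] A unfolding \<gamma>_def by (intro mult_right_mono) auto
    also have "\<dots> \<le> (ob (b k) (q k) * \<theta> k) * \<gamma> ^ i0 * (A / 2)"
      using C6[of k] \<gamma> A by (intro mult_right_mono) auto
    also have "\<dots> = ob (b k) (q k) * (\<theta> k * \<gamma> ^ i0 * (A / 2))"
      by (simp add: algebra_simps)
    also have "\<dots> \<le> ob (b k) (q k) * (\<theta> k * \<gamma> ^ i0 * (A - C * \<gamma>))"
      using AC th0[of k] \<gamma> obp by (intro mult_left_mono) auto
    also have "\<dots> \<le> ob (b k) (q k) * norm (x (b k))"
      using lb obp by (rule mult_left_mono)
    also have "\<dots> = norm ((T ^^ q k) x (b k - int (q k)))"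
      by (simp add: norm_Tpow ob_def)
    also have "\<dots> \<le> N ((T ^^ q k) x)" by (rule Nle[OF xT])
    finally show ?thesis .
  qed
  show ?thesis unfolding filterlim_at_top
  proof
    fix Z :: real
    define L where "L = max (max K0 i0) (max (nat \<lceil>2 * C / A\<rceil>) (nat \<lceil>2 * Z / A\<rceil>))"
    show "eventually (\<lambda>k. Z \<le> N ((T ^^ q k) x)) sequentially"
    proof (rule eventually_mono[OF eventually_ge_at_top[of L]])
      fix k assume k: "L \<le> k"
      have "real (nat \<lceil>2 * C / A\<rceil>) \<le> real k" using k unfolding L_def by simp
      moreover have "2 * C / A \<le> real (nat \<lceil>2 * C / A\<rceil>)" by linarith
      ultimately have k3: "2 * C / A \<le> real k + 1" by linarith
      have "real (nat \<lceil>2 * Z / A\<rceil>) \<le> real k" using k unfolding L_def by simp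
      moreover have "2 * Z / A \<le> real (nat \<lceil>2 * Z / A\<rceil>)" by linarith
      ultimately have k4: "2 * Z / A \<le> real k + 1" by linarith
      have "Z \<le> (real k + 1) * (A / 2)" using k4 A by (simp add: divide_le_eq mult.commute)
      also have "\<dots> \<le> N ((T ^^ q k) x)" using main[of k] k k3 unfolding L_def by auto
      finally show "Z \<le> N ((T ^^ q k) x)" .
    qed
  qed
qed

end


context wsh2 begin

lemma M_dense: "dense_wrt N X M"
  unfolding dense_wrt_def
proof (intro conjI ballI allI impI)
  show "M \<subseteq> X" by (rule M_sub)
  fix x e assume x: "x \<in> X" and e: "(e::real) > 0"
  have eK: "e / (2 * K) > 0" using e K1 by simp
  obtain F where F: "finite F" "N (\<lambda>i. if i \<in> F then 0 else x i) < e / (2 * K)"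
    using Ntail[OF x eK] by blast
  define t where "t = (\<lambda>i. if i \<in> F then 0 else x i)"
  have t: "t \<in> X" using Ndom[of x 1 t 0] x by (auto simp: t_def)
  have Nt: "N t < e / (2 * K)" using F by (simp add: t_def)
  define Cx where "Cx = (\<Sum>m\<in>F. norm (x m))"
  have Cx: "Cx \<ge> 0" by (simp add: Cx_def sum_nonneg)
  define KF where "KF = K ^ card F"
  have KF: "KF \<ge> 1" using K1 by (simp add: KF_def one_le_power)
  define \<eta> where "\<eta> = e / (2 * K * KF * (Cx + 1))"
  have \<eta>: "\<eta> > 0" using e K1 KF Cx by (simp add: \<eta>_def)
  define R where "R = nat \<lceil>1 / \<eta>\<rceil>"
  have "1 / \<eta> \<le> real R" unfolding R_def by linarith
  then have "1 / \<eta> < real R + 1" by simp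
  then have epsR: "1 / (real R + 1) \<le> \<eta>" using \<eta> by (simp add: divide_less_eq field_simps)
  define im where "im m = to_nat (m, R)" for m :: int
  have mi_im: "mi (im m) = m" and eps_im: "eps (im m) = 1 / (real R + 1)" for m
    by (simp_all add: mi_def ri_def eps_def im_def)
  define y where "y = (\<lambda>j. \<Sum>m\<in>F. x m * g (im m) j)"
  have yM: "y \<in> M" unfolding y_def
    using F(1) by (intro M_sum M_scal g_in_M)
  define cm where "cm m = - (x m * of_real (1 / (real R + 1)))" for m
  define D where "D = (\<lambda>j. \<Sum>m\<in>F. cm m * zh (im m) j)"
  have eq: "(\<lambda>i. x i - y i) = (\<lambda>j. t j + D j)"
  proof (rule ext)
    fix j
    have "y j = (\<Sum>m\<in>F. x m * unit m j) + (\<Sum>m\<in>F. x m * of_real (1 / (real R + 1)) * zh (im m) j)"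
      unfolding y_def g_def mi_im eps_im by (simp add: distrib_left sum.distrib mult.assoc)
    also have "(\<Sum>m\<in>F. x m * unit m j) = (\<Sum>m\<in>F. if j = m then x m else 0)"
      by (rule sum.cong) (auto simp: unit_def)
    also have "\<dots> = (if j \<in> F then x j else 0)" using F(1) by simp
    finally show "x j - y j = t j + D j"
      by (simp add: t_def D_def cm_def sum_negf mult.assoc)
  qed
  have zcm: "(\<lambda>j. cm m * zh (im m) j) \<in> X \<and> N (\<lambda>j. cm m * zh (im m) j) \<le> norm (x m) * \<eta>" for m
  proof -
    have z: "zh (im m) \<in> X" "N (zh (im m)) \<le> 1" using zh_mem by auto
    have "N (\<lambda>j. cm m * zh (im m) j) \<le> norm (cm m) * N (zh (im m))" using scal_mem[OF z(1)] by blast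
    also have "\<dots> \<le> norm (cm m) * 1" using z(2) by (intro mult_left_mono) auto
    also have "norm (cm m) = norm (x m) * (1 / (real R + 1))"
      unfolding cm_def by (simp only: norm_minus_cancel norm_mult norm_of_real) simp
    also have "\<dots> * 1 \<le> norm (x m) * \<eta>" using mult_left_mono[OF epsR norm_ge_zero[of "x m"]] by simp
    finally show ?thesis using scal_mem[OF z(1)] by blast
  qed
  have DX: "D \<in> X" and ND: "N D \<le> KF * (Cx * \<eta>)"
  proof -
    have H: "(\<lambda>j. \<Sum>m\<in>F. cm m * zh (im m) j) \<in> X \<and>
        N (\<lambda>j. \<Sum>m\<in>F. cm m * zh (im m) j) \<le> K ^ card F * (\<Sum>m\<in>F. N (\<lambda>j. cm m * zh (im m) j))"
      by (rule sum_mem[OF F(1)]) (use zcm in blast)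
    then show "D \<in> X" by (simp add: D_def)
    have "(\<Sum>m\<in>F. N (\<lambda>j. cm m * zh (im m) j)) \<le> (\<Sum>m\<in>F. norm (x m) * \<eta>)"
      by (rule sum_mono) (use zcm in blast)
    also have "\<dots> = Cx * \<eta>" by (simp add: Cx_def sum_distrib_right)
    finally have "K ^ card F * (\<Sum>m\<in>F. N (\<lambda>j. cm m * zh (im m) j)) \<le> KF * (Cx * \<eta>)"
      using KF by (simp add: KF_def mult_left_mono)
    then show "N D \<le> KF * (Cx * \<eta>)" using H by (simp add: D_def)
  qed
  have "N (\<lambda>i. x i - y i) \<le> K * (N t + N D)" unfolding eq using Nadd[OF t DX] by blast
  also have "\<dots> < K * (e / (2 * K) + KF * (Cx * \<eta>))"
    using Nt ND K1 by (intro mult_strict_left_mono) auto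
  also have "\<dots> = e / 2 + K * KF * Cx * \<eta>"
    using K1 by (simp add: distrib_left)
  also have "\<dots> \<le> e / 2 + K * KF * (Cx + 1) * \<eta>"
    using K1 KF \<eta> by (intro add_left_mono mult_right_mono mult_left_mono) auto
  also have "K * KF * (Cx + 1) * \<eta> = e / 2"
  proof -
    have P: "K * KF * (Cx + 1) \<noteq> 0" using K1 KF Cx by auto
    have d: "2 * K * KF * (Cx + 1) = 2 * (K * KF * (Cx + 1))" by (simp add: mult.assoc)
    have "\<And>P::real. P \<noteq> 0 \<Longrightarrow> P * (e / (2 * P)) = e / 2" by simp
    then show ?thesis unfolding \<eta>_def d using P by blast
  qed
  finally show "\<exists>s\<in>M. N (\<lambda>i. x i - s i) < e" using yM by auto
qed

lemma M_subspace: "seq_subspace X M"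
  unfolding seq_subspace_def using M_sub M_zero M_add M_scal by blast

lemma M_irregular: assumes "x \<in> M" "x \<noteq> (\<lambda>i. 0)" shows "irregular_vector N T x"
proof -
  have xX: "x \<in> X" using assms M_sub by blast
  define f where "f n = N ((T ^^ n) x)" for n
  have pos: "0 < f n" for n unfolding f_def by (rule Tpow_pos[OF xX assms(2)])
  have "liminf (\<lambda>n. ereal (f n)) = 0"
  proof (rule liminf_zero_freq)
    show "0 \<le> f n" for n using pos less_imp_le by blast
    show "\<exists>n\<ge>N0. f n < e" if "e > 0" for N0 e
      by (rule freq_small[OF pos _ that, where r=p]) (use Tx_to0[OF assms(1)] in \<open>simp add: f_def\<close>)
  qed
  moreover have "limsup (\<lambda>n. ereal (f n)) = \<infinity>"
  proof (rule limsup_inf_freq)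
    show "\<exists>n\<ge>N0. Z < f n" for N0 Z
      by (rule freq_big[where f=f and r=q]) (use Tx_blow[OF assms] in \<open>simp add: f_def\<close>)
  qed
  ultimately show ?thesis by (simp add: irregular_vector_def f_def)
qed

lemma DIM: "dense_irregular_manifold N X T"
  unfolding dense_irregular_manifold_def using M_subspace M_dense M_irregular by blast

lemma DUL: "densely_uniformly_li_yorke_chaotic N X T"
  unfolding densely_uniformly_li_yorke_chaotic_def
proof (intro exI[of _ M] conjI)
  show "dense_wrt N X M" by (rule M_dense)
  show "uncountable M" by (rule M_uncountable)
  show "uniformly_li_yorke_scrambled N T M"
    unfolding uniformly_li_yorke_scrambled_def
  proof (rule conjI[OF M_two], rule exI[of _ p], rule exI[of _ q], intro ballI impI)
    fix x y assume x: "x \<in> M" and y: "y \<in> M" and xy: "x \<noteq> y"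
    have dM: "(\<lambda>j. x j - y j) \<in> M" by (rule M_diff[OF x y])
    have dnz: "(\<lambda>j. x j - y j) \<noteq> (\<lambda>j. 0)"
    proof
      assume "(\<lambda>j. x j - y j) = (\<lambda>j. 0)"
      then have "x = y" by (intro ext) (metis eq_iff_diff_eq_0)
      then show False using xy by simp
    qed
    have eqn: "(\<lambda>i. (T ^^ n) x i - (T ^^ n) y i) = (T ^^ n) (\<lambda>j. x j - y j)" for n
      by (rule ext) (rule Tpow_diff)
    have A: "(\<lambda>n. N (\<lambda>i. (T ^^ p n) x i - (T ^^ p n) y i)) \<longlonglongrightarrow> 0"
      unfolding eqn by (rule Tx_to0[OF dM])
    have B: "filterlim (\<lambda>n. N (\<lambda>i. (T ^^ q n) x i - (T ^^ q n) y i)) at_top sequentially"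
      unfolding eqn by (rule Tx_blow[OF dM dnz])
    from A B show "(\<lambda>n. N (\<lambda>i. (T ^^ p n) x i - (T ^^ p n) y i)) \<longlonglongrightarrow> 0 \<and>
      filterlim (\<lambda>n. N (\<lambda>i. (T ^^ q n) x i - (T ^^ q n) y i)) at_top sequentially" by (rule conjI)
  qed
qed

end


lemma liminf_freq:
  fixes f :: "nat \<Rightarrow> real"
  assumes li: "liminf (\<lambda>n. ereal (f n)) = 0" and e: "e > 0"
  shows "\<exists>n\<ge>N0. f n < e"
proof (rule ccontr)
  assume a: "\<not> (\<exists>n\<ge>N0. f n < e)"
  have b: "e \<le> f n" if "n \<ge> N0" for n using a that not_less by blast
  have "eventually (\<lambda>n. ereal e \<le> ereal (f n)) sequentially"
    unfolding eventually_sequentially using b by (intro exI[of _ N0]) simp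
  then have "ereal e \<le> liminf (\<lambda>n. ereal (f n))" by (rule Liminf_bounded)
  then have "ereal e \<le> 0" by (simp only: li)
  then show False using e by simp
qed

context wsh begin

definition Cond :: bool where
  "Cond \<longleftrightarrow> liminf (\<lambda>n::nat. ereal (\<Prod>j\<in>{- int n + 1..0}. norm (w j))) = 0 \<and>
     (SUP k::int. SUP n::nat. ereal (\<Prod>j\<in>{k..k + int n}. norm (w j))) = \<infinity>"

lemma prod_ob0: "(\<Prod>j\<in>{- int n + 1..0}. norm (w j)) = ob 0 n"
proof -
  have e: "(- int n + 1) + int n - 1 = (0::int)" by simp
  have "(\<Prod>t<n. norm (w (- int n + 1 + int t))) = (\<Prod>j\<in>{(- int n + 1)..(- int n + 1) + int n - 1}. norm (w j))"
    by (rule prod_int_ivl[symmetric])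
  then have a: "(\<Prod>t<n. norm (w (- int n + 1 + int t))) = (\<Prod>j\<in>{- int n + 1..0}. norm (w j))"
    by (simp only: e)
  have "ob 0 n = (\<Prod>t<n. norm (w (- int n + 1 + int t)))" unfolding ob_def V_def by simp
  then show ?thesis using a by simp
qed

lemma prod_V: "(\<Prod>j\<in>{k..k + int n}. norm (w j)) = VV k (Suc n)"
proof -
  have e: "k + int (Suc n) - 1 = k + int n" by simp
  have "(\<Prod>t<Suc n. norm (w (k + int t))) = (\<Prod>j\<in>{k..k + int (Suc n) - 1}. norm (w j))"
    by (rule prod_int_ivl[symmetric])
  then have "(\<Prod>t<Suc n. norm (w (k + int t))) = (\<Prod>j\<in>{k..k + int n}. norm (w j))"
    by (simp only: e)
  then show ?thesis unfolding V_def by simp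
qed

lemma Cond_iff: "Cond \<longleftrightarrow> liminf (\<lambda>n. ereal (ob 0 n)) = 0 \<and> (SUP k::int. SUP n::nat. ereal (VV k (Suc n))) = \<infinity>"
  unfolding Cond_def prod_ob0 prod_V ..

lemma Cond_imp:
  assumes Cond
  shows "dense_irregular_manifold N X T \<and> densely_uniformly_li_yorke_chaotic N X T"
proof -
  have li: "liminf (\<lambda>n. ereal (ob 0 n)) = 0" and su: "(SUP k::int. SUP n::nat. ereal (VV k (Suc n))) = \<infinity>"
    using assms Cond_iff by auto
  have freq: "\<exists>n\<ge>P0. ob 0 n < e" if "e > 0" for e P0 using liminf_freq[OF li that] .
  have unb: "\<exists>k n. VV k (Suc n) > H" for H
  proof -
    have "ereal H < \<infinity>" by simp
    have F: "\<forall>x<top. \<exists>k\<in>UNIV. x < (SUP n::nat. ereal (VV k (Suc n)))"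
      using su unfolding top_ereal_def[symmetric] SUP_eq_top_iff .
    have "ereal H < top" by (simp add: top_ereal_def)
    from F[rule_format, OF this] have "\<exists>k\<in>UNIV. ereal H < (SUP n::nat. ereal (VV k (Suc n)))" .
    then obtain k where "ereal H < (SUP n::nat. ereal (VV k (Suc n)))" by (elim bexE)
    then obtain n where "ereal H < ereal (VV k (Suc n))" by (auto simp: less_SUP_iff)
    then show ?thesis by auto
  qed
  obtain d where d: "d > 0" and H: "\<forall>v (\<beta>::nat\<Rightarrow>int). inj \<beta> \<longrightarrow> (\<forall>j. j \<notin> range \<beta> \<longrightarrow> v j = 0) \<longrightarrow>
     summable (\<lambda>k. norm (v (\<beta> k))) \<longrightarrow> (\<Sum>k. norm (v (\<beta> k))) \<le> d \<longrightarrow> v \<in> X \<and> N v \<le> 1"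
    using Nsparse[of 1] by auto
  define \<delta>1 where "\<delta>1 = min d 1"
  have d1: "0 < \<delta>1" "\<delta>1 \<le> 1" using d by (auto simp: \<delta>1_def)
  obtain p q b \<theta> where C:
     "(\<forall>k. p k < q k \<and> q k < p (Suc k))" "inj b"
     "(\<forall>j l. j < l \<longrightarrow> ob (b j) (p l) \<le> 1/(real l+1)^2)"
     "(\<forall>m l. \<bar>m\<bar> \<le> int l \<longrightarrow> ob m (p l) \<le> 1/(real l+1))"
     "(\<forall>k. 0 < \<theta> k \<and> \<theta> k \<le> \<delta>1 * (1/2)^(k+1) / B^(p k))"
     "(\<forall>k. (real k+1)^(k+1) \<le> ob (b k) (q k) * \<theta> k)"
    using construct[OF freq unb d1(1)] by blast
  have c1: "\<And>k. p k < q k" and c2: "\<And>k. q k < p (Suc k)" using C(1) by auto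
  have c3: "\<And>j l. j < l \<Longrightarrow> ob (b j) (p l) \<le> 1/(real l+1)^2" using C(3) by blast
  have c4: "\<And>m l. \<bar>m\<bar> \<le> int l \<Longrightarrow> ob m (p l) \<le> 1/(real l+1)" using C(4) by blast
  have c5: "\<And>k. 0 < \<theta> k" and c6: "\<And>k. \<theta> k \<le> \<delta>1 * (1/2)^(k+1) / B^(p k)" using C(5) by auto
  have c7: "\<And>k. (real k+1)^(k+1) \<le> ob (b k) (q k) * \<theta> k" using C(6) by blast
  have c8: "v \<in> X \<and> N v \<le> 1" if "inj \<beta>" "\<forall>j. j \<notin> range \<beta> \<longrightarrow> v j = 0"
     "summable (\<lambda>k. norm (v (\<beta> k)))" "(\<Sum>k. norm (v (\<beta> k))) \<le> \<delta>1" for v and \<beta> :: "nat \<Rightarrow> int"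
  proof -
    have "(\<Sum>k. norm (v (\<beta> k))) \<le> d" using that(4) by (simp add: \<delta>1_def)
    then show ?thesis using H that(1-3) by blast
  qed
  have "wsh2 X N w B K p q b \<theta> \<delta>1"
    by (rule wsh2.intro[OF wsh_axioms wsh2_axioms.intro[OF c1 c2 C(2) c3 c4 c5 c6 c7 d1 c8]])
  then interpret W: wsh2 X N w B K p q b \<theta> \<delta>1 .
  show ?thesis using W.DIM W.DUL by blast
qed

lemma DUL_imp_LYC:
  assumes "densely_uniformly_li_yorke_chaotic N X T" shows "li_yorke_chaotic N X T"
proof -
  obtain S where S: "dense_wrt N X S" "uncountable S" "uniformly_li_yorke_scrambled N T S"
    using assms by (auto simp: densely_uniformly_li_yorke_chaotic_def)
  have SX: "S \<subseteq> X" using S(1) by (simp add: dense_wrt_def)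
  obtain pp qq :: "nat \<Rightarrow> nat" where pq0: "\<forall>x\<in>S. \<forall>y\<in>S. x \<noteq> y \<longrightarrow>
        ((\<lambda>n. N (\<lambda>i. (T ^^ pp n) x i - (T ^^ pp n) y i)) \<longlonglongrightarrow> 0) \<and>
        filterlim (\<lambda>n. N (\<lambda>i. (T ^^ qq n) x i - (T ^^ qq n) y i)) at_top sequentially"
    using S(3) unfolding uniformly_li_yorke_scrambled_def by (elim exE conjE) (intro that)
  note pq = pq0[rule_format]
  have "li_yorke_pair N T x y" if xy: "x \<in> S" "y \<in> S" "x \<noteq> y" for x y
  proof -
    define v where "v = (\<lambda>j. x j - y j)"
    have xX: "x \<in> X" and yX: "y \<in> X" using xy SX by auto
    have vX: "v \<in> X"
    proof -
      have "(\<lambda>j. (-1) * y j) \<in> X" by (rule conjunct1[OF scal_mem[OF yX]])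
      from conjunct1[OF Nadd[OF xX this]] show ?thesis by (simp add: v_def)
    qed
    have vnz: "v \<noteq> (\<lambda>j. 0)"
    proof
      assume v0: "v = (\<lambda>j. 0)"
      have "x j = y j" for j using fun_cong[OF v0, of j] by (simp add: v_def)
      then have "x = y" by (rule ext)
      then show False using xy by simp
    qed
    define f where "f n = N ((T ^^ n) v)" for n
    have eqf: "N (\<lambda>i. (T ^^ n) x i - (T ^^ n) y i) = f n" for n
      unfolding f_def v_def by (simp add: Tpow_diff)
    have pos: "0 < f n" for n unfolding f_def by (rule Tpow_pos[OF vX vnz])
    have l1: "(\<lambda>k. f (pp k)) \<longlonglongrightarrow> 0" using pq[OF xy] eqf by simp
    have l2: "filterlim (\<lambda>k. f (qq k)) at_top sequentially" using pq[OF xy] eqf by simp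
    have "liminf (\<lambda>n. ereal (f n)) = 0"
    proof (rule liminf_zero_freq)
      show "0 \<le> f n" for n using pos[of n] by simp
      show "\<exists>n\<ge>N0. f n < e" if "e > 0" for N0 e by (rule freq_small[where f=f and r=pp, OF pos l1 that])
    qed
    moreover have "limsup (\<lambda>n. ereal (f n)) = \<infinity>"
      by (rule limsup_inf_freq) (rule freq_big[where f=f and r=qq, OF l2])
    ultimately show ?thesis unfolding li_yorke_pair_def eqf by simp
  qed
  then have "\<forall>x\<in>S. \<forall>y\<in>S. x \<noteq> y \<longrightarrow> li_yorke_pair N T x y" by (intro ballI impI)
  with SX S(2) have "S \<subseteq> X \<and> uncountable S \<and> (\<forall>x\<in>S. \<forall>y\<in>S. x \<noteq> y \<longrightarrow> li_yorke_pair N T x y)"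
    by (intro conjI)
  then show ?thesis unfolding li_yorke_chaotic_def by (intro exI[of _ S])
qed

lemma LYC_imp_pair:
  assumes "li_yorke_chaotic N X T" shows "\<exists>x\<in>X. \<exists>y\<in>X. li_yorke_pair N T x y"
proof -
  obtain S where S: "S \<subseteq> X" "uncountable S" "\<forall>x\<in>S. \<forall>y\<in>S. x \<noteq> y \<longrightarrow> li_yorke_pair N T x y"
    using assms unfolding li_yorke_chaotic_def by (elim exE conjE) (intro that)
  have inf: "infinite S" using S(2) by (rule uncountable_infinite)
  then have "S \<noteq> {}" by (rule infinite_imp_nonempty)
  then obtain x where x: "x \<in> S" by (metis ex_in_conv)
  have "infinite (S - {x})" using inf by simp
  then have "S - {x} \<noteq> {}" by (rule infinite_imp_nonempty)
  then obtain y where y0: "y \<in> S - {x}" by (metis ex_in_conv)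
  have yS: "y \<in> S" and yx: "x \<noteq> y" using y0 by auto
  have pair: "li_yorke_pair N T x y" by (rule S(3)[rule_format, OF x yS yx])
  have xX: "x \<in> X" and yX: "y \<in> X" using x yS S(1) by auto
  have "\<exists>y\<in>X. li_yorke_pair N T x y" using pair yX by (rule bexI)
  then show ?thesis using xX by (rule bexI)
qed

lemma Tpow_zero: "(T ^^ n) (\<lambda>j. 0) = (\<lambda>j. 0)"
  by (rule ext) (simp add: Tpow)

lemma DIM_imp_pair:
  assumes "dense_irregular_manifold N X T" shows "\<exists>x\<in>X. \<exists>y\<in>X. li_yorke_pair N T x y"
proof -
  obtain M where M: "seq_subspace X M" "dense_wrt N X M" "\<forall>x\<in>M. x \<noteq> (\<lambda>i. 0) \<longrightarrow> irregular_vector N T x"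
    using assms by (auto simp: dense_irregular_manifold_def)
  have MX: "M \<subseteq> X" using M(1) by (simp add: seq_subspace_def)
  have "\<forall>x\<in>X. \<forall>e>0. \<exists>s\<in>M. N (\<lambda>i. x i - s i) < e" using M(2) by (simp add: dense_wrt_def)
  from this[rule_format, OF unit_mem zero_less_one] obtain s where s: "s \<in> M" "N (\<lambda>i. unit 0 i - s i) < 1"
    by blast
  have snz: "s \<noteq> (\<lambda>i. 0)"
  proof
    assume "s = (\<lambda>i. 0)"
    then have "N (unit 0) < 1" using s by simp
    moreover have "norm (unit 0 0) \<le> N (unit 0)" using Nle[OF unit_mem] .
    ultimately show False by (simp add: unit_def)
  qed
  have irr: "irregular_vector N T s" by (rule M(3)[rule_format, OF s(1) snz])
  have eq: "(\<lambda>i. (T ^^ n) s i - (T ^^ n) (\<lambda>j. 0) i) = (T ^^ n) s" for n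
    by (simp add: Tpow_zero)
  have "li_yorke_pair N T s (\<lambda>j. 0)"
    using irr unfolding li_yorke_pair_def irregular_vector_def eq by simp
  have "\<exists>y\<in>X. li_yorke_pair N T s y" using \<open>li_yorke_pair N T s (\<lambda>j. 0)\<close> zero_mem by (rule bexI)
  moreover have "s \<in> X" using s MX by auto
  ultimately show ?thesis by (rule bexI)
qed

end


context wsh begin

lemma pair_imp_Cond:
  assumes xX: "x \<in> X" and yX: "y \<in> X" and pr: "li_yorke_pair N T x y"
  shows Cond
proof -
  define v where "v = (\<lambda>j. x j - y j)"
  have vX: "v \<in> X"
  proof -
    have "(\<lambda>j. (-1) * y j) \<in> X" by (rule conjunct1[OF scal_mem[OF yX]])
    from conjunct1[OF Nadd[OF xX this]] show ?thesis by (simp add: v_def)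
  qed
  define f where "f n = N ((T ^^ n) v)" for n
  have eqf: "N (\<lambda>i. (T ^^ n) x i - (T ^^ n) y i) = f n" for n
    unfolding f_def v_def by (simp add: Tpow_diff)
  have li: "liminf (\<lambda>n. ereal (f n)) = 0" and ls: "0 < limsup (\<lambda>n. ereal (f n))"
    using pr unfolding li_yorke_pair_def eqf by auto
  have fX: "(T ^^ n) v \<in> X" for n using Tpow_mem[OF vX] by blast
  have f0: "0 \<le> f n" for n unfolding f_def using N_nonneg[OF fX] .
  have vnz: "v \<noteq> (\<lambda>j. 0)"
  proof
    assume v0: "v = (\<lambda>j. 0)"
    have "f n = 0" for n unfolding f_def v0 Tpow_zero by (rule N_zero)
    then have "limsup (\<lambda>n. ereal (f n)) = 0" by (simp add: Limsup_const)
    then show False using ls by simp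
  qed
  then obtain m where vm: "v m \<noteq> 0" by (metis ext)
  have fm: "ob m n * norm (v m) \<le> f n" for n
  proof -
    have "norm ((T ^^ n) v (m - int n)) \<le> f n" unfolding f_def by (rule Nle[OF fX])
    moreover have "norm ((T ^^ n) v (m - int n)) = ob m n * norm (v m)" by (simp add: norm_Tpow ob_def)
    ultimately show ?thesis by simp
  qed
  have frm: "\<exists>n\<ge>N0. ob m n < e" if e: "e > 0" for N0 e
  proof -
    have "e * norm (v m) > 0" using e vm by simp
    from liminf_freq[OF li this] obtain n where n: "n \<ge> N0" "f n < e * norm (v m)" by blast
    then have "ob m n * norm (v m) < e * norm (v m)" using fm[of n] by linarith
    then have "ob m n < e" using vm by (simp add: mult_less_cancel_right)
    then show ?thesis using n by blast
  qed
  have fr0: "\<exists>n\<ge>N0. ob 0 n < e" if e: "e > 0" for N0 e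
  proof (cases "m \<ge> 0")
    case True
    then obtain k where k: "m = int k" using nonneg_int_cases by blast
    have "e * VV 1 k > 0" using e V_pos by simp
    from frm[OF this, of "N0 + k"] obtain n where n: "n \<ge> N0 + k" "ob m n < e * VV 1 k" by blast
    have "ob m n = ob (0 + int k) ((n - k) + k)" using n k by simp
    also have "\<dots> = VV 1 k * ob 0 (n - k)" using ob_R2[of 0 k "n - k"] by simp
    finally have "VV 1 k * ob 0 (n - k) < VV 1 k * e" using n by (simp add: mult.commute)
    then have "ob 0 (n - k) < e" using V_pos[of 1 k] by (simp add: mult_less_cancel_left)
    then show ?thesis using n by (intro exI[of _ "n - k"]) auto
  next
    case False
    then obtain k where k: "m = - int k" by (metis nonneg_int_cases neg_0_le_iff_le linorder_linear minus_minus)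
    have Bk: "B ^ k > 0" using B1 by simp
    from frm[of "e / B ^ k" N0] e Bk obtain n where n: "n \<ge> N0" "ob m n < e / B ^ k" by auto
    have "ob 0 (n + k) = ob (m + int k) (n + k)" using k by simp
    also have "\<dots> = VV (m + 1) k * ob m n" by (rule ob_R2)
    also have "\<dots> \<le> B ^ k * ob m n" using ob_pos[of m n] by (intro mult_right_mono V_le) auto
    also have "\<dots> < B ^ k * (e / B ^ k)" using n Bk by (intro mult_strict_left_mono) auto
    also have "\<dots> = e" using Bk B1 by simp
    finally show ?thesis using n by (intro exI[of _ "n + k"]) auto
  qed
  have L: "liminf (\<lambda>n. ereal (ob 0 n)) = 0"
  proof (rule liminf_zero_freq)
    show "0 \<le> ob 0 n" for n using ob_pos less_imp_le by blast
    show "\<exists>n\<ge>N0. ob 0 n < e" if "e > 0" for N0 e by (rule fr0[OF that])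
  qed
  have S: "(SUP k::int. SUP n::nat. ereal (VV k (Suc n))) = \<infinity>"
  proof (rule ccontr)
    assume ne: "(SUP k::int. SUP n::nat. ereal (VV k (Suc n))) \<noteq> \<infinity>"
    define Sv where "Sv = (SUP k::int. SUP n::nat. ereal (VV k (Suc n)))"
    have up: "ereal (VV k (Suc n)) \<le> Sv" for k n
      unfolding Sv_def by (rule SUP_upper2[of k]) (auto intro: SUP_upper)
    have "Sv \<noteq> - \<infinity>" using up[of 0 0] by auto
    moreover have "Sv \<noteq> \<infinity>" using ne by (simp add: Sv_def)
    ultimately obtain K0 where K0: "Sv = ereal K0" by (cases Sv) auto
    define K1 where "K1 = max 1 K0"
    have K1: "K1 \<ge> 1" by (simp add: K1_def)
    have VK: "VV a n \<le> K1" for a n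
    proof (cases n)
      case 0 then show ?thesis by (simp add: V_def K1_def)
    next
      case (Suc n') then show ?thesis using up[of a n'] K0 by (simp add: K1_def)
    qed
    have TN: "N ((T ^^ n) u) \<le> K1 * N u" if "u \<in> X" for u n
    proof -
      have "norm ((T ^^ n) u i) \<le> K1 * norm (u (i + int n))" for i
        unfolding norm_Tpow by (rule mult_right_mono[OF VK norm_ge_zero])
      then show ?thesis using Ndom[of u K1 "(T ^^ n) u" "int n"] that K1 by auto
    qed
    obtain z where z: "0 < ereal z" "ereal z < limsup (\<lambda>n. ereal (f n))" using ereal_dense2[OF ls] by blast
    have zp: "z > 0" using z by simp
    from liminf_freq[OF li, of "z / K1" 0] zp K1 obtain n0 where n0: "f n0 < z / K1" by auto
    have "eventually (\<lambda>n. ereal (f n) \<le> ereal z) sequentially"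
      unfolding eventually_sequentially
    proof (intro exI[of _ n0] allI impI)
      fix n assume n: "n \<ge> n0"
      have "(T ^^ n) v = (T ^^ (n - n0)) ((T ^^ n0) v)"
        using n by (metis funpow_add le_add_diff_inverse2 comp_apply)
      then have "f n \<le> K1 * f n0" unfolding f_def using TN[OF fX] by simp
      also have "\<dots> \<le> K1 * (z / K1)" using n0 K1 by (intro mult_left_mono) auto
      also have "\<dots> = z" using K1 by simp
      finally show "ereal (f n) \<le> ereal z" by simp
    qed
    then have "limsup (\<lambda>n. ereal (f n)) \<le> ereal z" by (rule Limsup_bounded)
    then show False using z by simp
  qed
  show ?thesis using L S Cond_iff by blast
qed

end


theorem theorem3p10:
  fixes w :: "int \<Rightarrow> 'a::{real_normed_field,banach}"
    and X :: "(int \<Rightarrow> 'a) set" and N :: "(int \<Rightarrow> 'a) \<Rightarrow> real" and p :: real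
  assumes space: "(1 \<le> p \<and> X = lp_space p \<and> N = lp_norm p) \<or> (X = c0_space \<and> N = sup_norm)"
    and bdd: "bounded (range w)"
    and nz: "\<And>j. w j \<noteq> 0"
  defines "T \<equiv> bw_shift w"
  shows
    "((liminf (\<lambda>n::nat. ereal (\<Prod>j\<in>{- int n + 1..0}. norm (w j))) = 0 \<and>
       (SUP k::int. SUP n::nat. ereal (\<Prod>j\<in>{k..k + int n}. norm (w j))) = \<infinity>)
      \<longleftrightarrow> (\<exists>x\<in>X. \<exists>y\<in>X. li_yorke_pair N T x y))
   \<and> ((\<exists>x\<in>X. \<exists>y\<in>X. li_yorke_pair N T x y) \<longleftrightarrow> li_yorke_chaotic N X T)
   \<and> (li_yorke_chaotic N X T \<longleftrightarrow> dense_irregular_manifold N X T)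
   \<and> (dense_irregular_manifold N X T \<longleftrightarrow> densely_uniformly_li_yorke_chaotic N X T)"
proof -
  have good: "good_space X N"
    using space
  proof (elim disjE conjE)
    assume "1 \<le> p" "X = lp_space p" "N = lp_norm p"
    then show ?thesis using good_lp[of p] by simp
  next
    assume "X = c0_space" "N = sup_norm"
    then show ?thesis using good_c0 by simp
  qed
  obtain B0 where B0: "\<forall>x\<in>range w. norm x \<le> B0" using bdd unfolding bounded_iff by (elim exE)
  define B where "B = max 1 B0"
  have B1: "B \<ge> 1" by (simp add: B_def)
  have wB: "\<And>j. norm (w j) \<le> B"
  proof -
    fix j have "norm (w j) \<le> B0" using B0 by simp
    then show "norm (w j) \<le> B" by (simp add: B_def)
  qed
  note G = good[unfolded good_space_def]
  have g1: "\<And>x i. x \<in> X \<Longrightarrow> norm (x i) \<le> N x" using conjunct1[OF G] by simp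
  obtain K where K1: "K \<ge> 1" and g2': "\<forall>x\<in>X. \<forall>y\<in>X. (\<lambda>i. x i + y i) \<in> X \<and> N (\<lambda>i. x i + y i) \<le> K * (N x + N y)"
    using conjunct1[OF conjunct2[OF G]] by (elim exE conjE)
  have g2: "\<And>x y. x \<in> X \<Longrightarrow> y \<in> X \<Longrightarrow> (\<lambda>i. x i + y i) \<in> X \<and> N (\<lambda>i. x i + y i) \<le> K * (N x + N y)"
    using g2' by simp
  have g3': "\<forall>a b c s. b \<in> X \<longrightarrow> c \<ge> 0 \<longrightarrow> (\<forall>i. norm (a i) \<le> c * norm (b (i + s))) \<longrightarrow> a \<in> X \<and> N a \<le> c * N b"
    using conjunct1[OF conjunct2[OF conjunct2[OF G]]] .
  have g3: "\<And>a b c s. b \<in> X \<Longrightarrow> c \<ge> 0 \<Longrightarrow> (\<And>i. norm (a i) \<le> c * norm (b (i + s))) \<Longrightarrow> a \<in> X \<and> N a \<le> c * N b"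
  proof -
    fix a b :: "int \<Rightarrow> 'a" and c :: real and s :: int assume "b \<in> X" "c \<ge> 0" "\<And>i. norm (a i) \<le> c * norm (b (i + s))"
    then show "a \<in> X \<and> N a \<le> c * N b" using g3'[rule_format, of b c a s] by blast
  qed
  have g4: "\<And>x e. x \<in> X \<Longrightarrow> e > 0 \<Longrightarrow> \<exists>F. finite F \<and> N (\<lambda>i. if i \<in> F then 0 else x i) < e"
    using conjunct1[OF conjunct2[OF conjunct2[OF conjunct2[OF G]]]] by simp
  have g5: "\<And>e. e > 0 \<Longrightarrow> \<exists>d>0. \<forall>v (\<beta>::nat\<Rightarrow>int). inj \<beta> \<longrightarrow> (\<forall>j. j \<notin> range \<beta> \<longrightarrow> v j = 0) \<longrightarrow>
     summable (\<lambda>k. norm (v (\<beta> k))) \<longrightarrow> (\<Sum>k. norm (v (\<beta> k))) \<le> d \<longrightarrow> v \<in> X \<and> N v \<le> e"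
    using conjunct2[OF conjunct2[OF conjunct2[OF conjunct2[OF G]]]] by simp
  interpret W: wsh X N w B K
    by (rule wsh.intro[OF g1 K1 g2 g3 g4 g5 B1 wB nz])
  have C: "(liminf (\<lambda>n::nat. ereal (\<Prod>j\<in>{- int n + 1..0}. norm (w j))) = 0 \<and>
       (SUP k::int. SUP n::nat. ereal (\<Prod>j\<in>{k..k + int n}. norm (w j))) = \<infinity>) \<longleftrightarrow> W.Cond"
    by (simp only: W.Cond_def)
  have a: "W.Cond \<Longrightarrow> dense_irregular_manifold N X T \<and> densely_uniformly_li_yorke_chaotic N X T"
    unfolding T_def by (rule W.Cond_imp)
  have b: "(\<exists>x\<in>X. \<exists>y\<in>X. li_yorke_pair N T x y) \<Longrightarrow> W.Cond"
    unfolding T_def by (elim bexE) (rule W.pair_imp_Cond)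
  have c: "densely_uniformly_li_yorke_chaotic N X T \<Longrightarrow> li_yorke_chaotic N X T"
    unfolding T_def by (rule W.DUL_imp_LYC)
  have d: "li_yorke_chaotic N X T \<Longrightarrow> (\<exists>x\<in>X. \<exists>y\<in>X. li_yorke_pair N T x y)"
    unfolding T_def by (rule W.LYC_imp_pair)
  have e: "dense_irregular_manifold N X T \<Longrightarrow> (\<exists>x\<in>X. \<exists>y\<in>X. li_yorke_pair N T x y)"
    unfolding T_def by (rule W.DIM_imp_pair)
  show ?thesis unfolding C
  proof (intro conjI iffI)
    assume "W.Cond" then show "\<exists>x\<in>X. \<exists>y\<in>X. li_yorke_pair N T x y" using a e by simp
  next
    assume "\<exists>x\<in>X. \<exists>y\<in>X. li_yorke_pair N T x y" then show "W.Cond" by (rule b)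
  next
    assume "\<exists>x\<in>X. \<exists>y\<in>X. li_yorke_pair N T x y" then show "li_yorke_chaotic N X T" using a b c by simp
  next
    assume "li_yorke_chaotic N X T" then show "\<exists>x\<in>X. \<exists>y\<in>X. li_yorke_pair N T x y" by (rule d)
  next
    assume "li_yorke_chaotic N X T" then show "dense_irregular_manifold N X T" using a b d by simp
  next
    assume "dense_irregular_manifold N X T" then show "li_yorke_chaotic N X T" using a b c e by simp
  next
    assume "dense_irregular_manifold N X T" then show "densely_uniformly_li_yorke_chaotic N X T" using a b e by simp
  next
    assume "densely_uniformly_li_yorke_chaotic N X T" then show "dense_irregular_manifold N X T" using a b c d by simp
  qed
qed


end
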